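(* $\mathcal{N}_{\mathbb{M}^{\mathrm{Club}}_\kappa}=\mathcal{I}_{\mathbb{M}^{\mathrm{Club}}_\kappa}$.
   Context: $\kappa$ is an uncountable regular cardinal with $\kappa=2^{<\kappa}$. $\mathbb{M}^{\mathrm{Club}}_\kappa$ consists of pruned $<\kappa$-closed trees $p\subseteq\kappa^{<\kappa}$, ordered by inclusion, such that every $s\in p$ has an extension $t\in p$ with $\mathrm{succ}(t,p)=\{\alpha<\kappa: t^\frown\alpha\in p\}$ club in $\kappa$ (such $t$ is club-splitting; $t^\frown\alpha$ is $t$ extended by $\alpha$), and for every branch $x\in[p]$ the set $\{\alpha<\kappa: x\restriction\alpha \text{ is club-splitting}\}$ is club. For a tree-forcing $\mathbb{P}$, $\mathcal{N}_\mathbb{P}$ is the family of $\mathbb{P}$-nowhere dense sets ($X$ such that every $p$ has $q\leq p$ with $[q]\cap X=\emptyset$) and $\mathcal{I}_\mathbb{P}$ the family of sets covered by $\kappa$ many $\mathbb{P}$-nowhere dense sets. *)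

theory Defs
  imports Main "HOL-Library.Countable_Set"
begin

(* The cardinal kappa is represented by a type 'a together with a cardinal
   well-order r on UNIV :: 'a set (so kappa = |UNIV :: 'a set|, and the
   ordinals below kappa are the elements of 'a ordered by r).
   A node of kappa^{<kappa} is a partial map s :: 'a \<rightharpoonup> 'a whose domain is
   the initial segment underS r alpha (alpha = length of s).
   A branch (element of kappa^kappa) is a total function x :: 'a \<Rightarrow> 'a. *)

definition kappa_assms :: "'a rel \<Rightarrow> bool" where
  "kappa_assms r \<longleftrightarrow>
     card_order r \<and> regularCard r \<and> \<not> countable (UNIV :: 'a set) \<and>
     ordIso2 (BNF_Cardinal_Order_Relation.card_of
                {s :: 'a \<Rightarrow> bool option. \<exists>\<alpha>. dom s = underS r \<alpha>}) r"

definition lt :: "'a rel \<Rightarrow> 'a \<Rightarrow> 'a \<Rightarrow> bool" where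
  "lt r \<alpha> \<beta> \<longleftrightarrow> (\<alpha>, \<beta>) \<in> r \<and> \<alpha> \<noteq> \<beta>"

definition Seqs :: "'a rel \<Rightarrow> ('a \<Rightarrow> 'a option) set" where
  "Seqs r = {s. \<exists>\<alpha>. dom s = underS r \<alpha>}"

definition restr :: "'a rel \<Rightarrow> ('a \<Rightarrow> 'a) \<Rightarrow> 'a \<Rightarrow> ('a \<Rightarrow> 'a option)" where
  "restr r x \<alpha> = (Some \<circ> x) |` underS r \<alpha>"

definition unbounded :: "'a rel \<Rightarrow> 'a set \<Rightarrow> bool" where
  "unbounded r C \<longleftrightarrow> (\<forall>\<alpha>. \<exists>\<beta>\<in>C. lt r \<alpha> \<beta>)"

definition closed_set :: "'a rel \<Rightarrow> 'a set \<Rightarrow> bool" where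
  "closed_set r C \<longleftrightarrow>
     (\<forall>\<alpha>. (\<exists>\<beta>. lt r \<beta> \<alpha>) \<and> (\<forall>\<beta>. lt r \<beta> \<alpha> \<longrightarrow> (\<exists>\<gamma>\<in>C. lt r \<beta> \<gamma> \<and> lt r \<gamma> \<alpha>))
          \<longrightarrow> \<alpha> \<in> C)"

definition club :: "'a rel \<Rightarrow> 'a set \<Rightarrow> bool" where
  "club r C \<longleftrightarrow> closed_set r C \<and> unbounded r C"

definition is_limit :: "'a rel \<Rightarrow> 'a \<Rightarrow> bool" where
  "is_limit r \<delta> \<longleftrightarrow> (\<exists>\<beta>. lt r \<beta> \<delta>) \<and> (\<forall>\<beta>. lt r \<beta> \<delta> \<longrightarrow> (\<exists>\<gamma>. lt r \<beta> \<gamma> \<and> lt r \<gamma> \<delta>))"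

(* succ(t,p) = {beta. t^beta \<in> p}, where t^beta = t(len t := beta) *)
definition succ_set :: "'a rel \<Rightarrow> ('a \<Rightarrow> 'a option) \<Rightarrow> ('a \<Rightarrow> 'a option) set \<Rightarrow> 'a set" where
  "succ_set r t p = {\<beta>. \<exists>\<delta>. dom t = underS r \<delta> \<and> t(\<delta> \<mapsto> \<beta>) \<in> p}"

definition club_splitting :: "'a rel \<Rightarrow> ('a \<Rightarrow> 'a option) set \<Rightarrow> ('a \<Rightarrow> 'a option) \<Rightarrow> bool" where
  "club_splitting r p t \<longleftrightarrow> club r (succ_set r t p)"

definition branches :: "'a rel \<Rightarrow> ('a \<Rightarrow> 'a option) set \<Rightarrow> ('a \<Rightarrow> 'a) set" where
  "branches r p = {x. \<forall>\<alpha>. restr r x \<alpha> \<in> p}"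

definition is_tree :: "'a rel \<Rightarrow> ('a \<Rightarrow> 'a option) set \<Rightarrow> bool" where
  "is_tree r p \<longleftrightarrow> p \<noteq> {} \<and> p \<subseteq> Seqs r \<and>
     (\<forall>t\<in>p. \<forall>s\<in>Seqs r. s \<subseteq>\<^sub>m t \<longrightarrow> s \<in> p)"

definition pruned :: "'a rel \<Rightarrow> ('a \<Rightarrow> 'a option) set \<Rightarrow> bool" where
  "pruned r p \<longleftrightarrow> (\<forall>s\<in>p. \<exists>t\<in>p. s \<subseteq>\<^sub>m t \<and> s \<noteq> t)"

definition lt_kappa_closed :: "'a rel \<Rightarrow> ('a \<Rightarrow> 'a option) set \<Rightarrow> bool" where
  "lt_kappa_closed r p \<longleftrightarrow>
     (\<forall>s \<delta>. dom s = underS r \<delta> \<and> is_limit r \<delta> \<and>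
        (\<forall>\<alpha>. lt r \<alpha> \<delta> \<longrightarrow> s |` underS r \<alpha> \<in> p) \<longrightarrow> s \<in> p)"

definition MClub :: "'a rel \<Rightarrow> ('a \<Rightarrow> 'a option) set set" where
  "MClub r = {p. is_tree r p \<and> pruned r p \<and> lt_kappa_closed r p \<and>
      (\<forall>s\<in>p. \<exists>t\<in>p. s \<subseteq>\<^sub>m t \<and> club_splitting r p t) \<and>
      (\<forall>x\<in>branches r p. club r {\<alpha>. club_splitting r p (restr r x \<alpha>)})}"

definition nowhere_dense :: "'a rel \<Rightarrow> ('a \<Rightarrow> 'a option) set set \<Rightarrow> ('a \<Rightarrow> 'a) set set" where
  "nowhere_dense r P = {X. \<forall>p\<in>P. \<exists>q\<in>P. q \<subseteq> p \<and> branches r q \<inter> X = {}}"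

definition ideal_I :: "'a rel \<Rightarrow> ('a \<Rightarrow> 'a option) set set \<Rightarrow> ('a \<Rightarrow> 'a) set set" where
  "ideal_I r P = {X. \<exists>F :: 'a \<Rightarrow> ('a \<Rightarrow> 'a) set.
                   (\<forall>\<alpha>. F \<alpha> \<in> nowhere_dense r P) \<and> X \<subseteq> (\<Union>\<alpha>. F \<alpha>)}"

end

theory Submission
  imports Defs
begin

unbundle cardinal_syntax

locale K =
  fixes r :: "'a rel"
  assumes KA: "kappa_assms r"
begin

lemma CO: "card_order r" using KA unfolding kappa_assms_def by auto
lemma REG: "regularCard r" using KA unfolding kappa_assms_def by auto
lemma UNC: "\<not> countable (UNIV :: 'a set)" using KA unfolding kappa_assms_def by auto
lemma FLD: "Field r = UNIV" using CO card_order_on_Card_order by blast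
lemma WO: "Well_order r" using CO FLD unfolding card_order_on_def by auto
lemma wor: "wo_rel r" using WO unfolding wo_rel_def .

lemma le_refl[simp]: "(a,a) \<in> r"
  using WO FLD unfolding well_order_on_def linear_order_on_def partial_order_on_def preorder_on_def refl_on_def by auto
lemma le_trans: "(a,b) \<in> r \<Longrightarrow> (b,c) \<in> r \<Longrightarrow> (a,c) \<in> r"
  using WO unfolding well_order_on_def linear_order_on_def partial_order_on_def preorder_on_def trans_def by blast
lemma le_antisym: "(a,b) \<in> r \<Longrightarrow> (b,a) \<in> r \<Longrightarrow> a = b"
  using WO unfolding well_order_on_def linear_order_on_def partial_order_on_def antisym_def by blast
lemma le_total: "(a,b) \<in> r \<or> (b,a) \<in> r"
proof (cases "a = b")
  case False
  thus ?thesis using WO FLD unfolding well_order_on_def linear_order_on_def total_on_def by blast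
qed simp

abbreviation less (infix "\<prec>" 50) where "a \<prec> b \<equiv> lt r a b"

lemma lt_irrefl[simp]: "\<not> a \<prec> a" by (simp add: lt_def)
lemma lt_trans: "a \<prec> b \<Longrightarrow> b \<prec> c \<Longrightarrow> a \<prec> c"
  unfolding lt_def by (metis le_trans le_antisym)
lemma lt_le_trans: "a \<prec> b \<Longrightarrow> (b,c) \<in> r \<Longrightarrow> a \<prec> c"
  unfolding lt_def by (metis le_trans le_antisym)
lemma le_lt_trans: "(a,b) \<in> r \<Longrightarrow> b \<prec> c \<Longrightarrow> a \<prec> c"
  unfolding lt_def by (metis le_trans le_antisym)
lemma not_lt: "\<not> a \<prec> b \<longleftrightarrow> (b,a) \<in> r"
  unfolding lt_def using le_total[of a b] le_antisym[of a b] by auto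
lemma lt_total: "a \<prec> b \<or> a = b \<or> b \<prec> a"
  using not_lt unfolding lt_def by metis
lemma lt_imp_le: "a \<prec> b \<Longrightarrow> (a,b) \<in> r" by (simp add: lt_def)
lemma lt_asym: "a \<prec> b \<Longrightarrow> \<not> b \<prec> a" using lt_trans lt_irrefl by metis

lemma underS_eq: "underS r a = {b. b \<prec> a}"
  unfolding underS_def lt_def by auto

lemma wf_lt: "wf {(a,b). a \<prec> b}"
proof -
  have "wf (r - Id)" using WO unfolding well_order_on_def by auto
  moreover have "{(a,b). a \<prec> b} = r - Id" unfolding lt_def by auto
  ultimately show ?thesis by simp
qed

lemma lt_induct: "(\<And>a. (\<And>b. b \<prec> a \<Longrightarrow> P b) \<Longrightarrow> P a) \<Longrightarrow> P a"
  using wf_induct[OF wf_lt, of P] by auto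

lemma least_ex: "P a \<Longrightarrow> \<exists>m. P m \<and> (\<forall>b. P b \<longrightarrow> (m,b) \<in> r)"
proof -
  assume "P a"
  then obtain m where m: "m \<in> {x. P x}" "\<forall>y. (y,m) \<in> {(a,b). a \<prec> b} \<longrightarrow> y \<notin> {x. P x}"
    using wf_eq_minimal[THEN iffD1, OF wf_lt, rule_format, of a "{x. P x}"] by blast
  thus ?thesis using not_lt by auto
qed

lemma nomax: "\<exists>b. a \<prec> b"
proof -
  have "\<not> finite (UNIV :: 'a set)" using UNC countable_finite by blast
  hence "\<exists>b \<in> Field r. a \<noteq> b \<and> (a,b) \<in> r"
    using infinite_Card_order_limit[of r a] CO FLD card_order_on_Card_order by force
  thus ?thesis unfolding lt_def by auto
qed

lemma underS_inj: "underS r a = underS r b \<Longrightarrow> a = b"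
proof -
  assume eq: "underS r a = underS r b"
  { assume "a \<prec> b" hence "a \<in> underS r b" unfolding underS_eq by simp
    hence "a \<in> underS r a" using eq by simp
    hence False unfolding underS_eq by simp }
  moreover
  { assume "b \<prec> a" hence "b \<in> underS r a" unfolding underS_eq by simp
    hence "b \<in> underS r b" using eq by simp
    hence False unfolding underS_eq by simp }
  ultimately show ?thesis using lt_total[of a b] by blast
qed

lemma underS_mono: "(a,b) \<in> r \<Longrightarrow> underS r a \<subseteq> underS r b"
  unfolding underS_eq using lt_le_trans by blast

lemma underS_card: "|underS r a| <o r"
  using card_of_underS[of r a] CO FLD card_order_on_Card_order by blast

lemma small_bounded:
  assumes "|KK| <o r" shows "\<exists>a. \<forall>b\<in>KK. b \<prec> a"
proof -
  have "\<not> cofinal KK r"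
  proof
    assume "cofinal KK r"
    hence "|KK| =o r" using REG FLD unfolding regularCard_def by auto
    thus False using assms not_ordLess_ordIso by blast
  qed
  then obtain a where a: "\<forall>b\<in>KK. \<not> (a \<noteq> b \<and> (a,b) \<in> r)" unfolding cofinal_def FLD by auto
  obtain c where "a \<prec> c" using nomax by blast
  have "\<forall>b\<in>KK. b \<prec> c"
  proof
    fix b assume "b \<in> KK"
    hence "(b,a) \<in> r" using a le_total[of a b] le_refl by (cases "a = b") auto
    thus "b \<prec> c" using \<open>a \<prec> c\<close> le_lt_trans by blast
  qed
  thus ?thesis by blast
qed

lemma unbounded_big:
  assumes "unbounded r KK" shows "\<not> |KK| <o r"
proof
  assume "|KK| <o r"
  then obtain a where "\<forall>b\<in>KK. b \<prec> a" using small_bounded by blast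
  moreover obtain b where "b \<in> KK" "a \<prec> b" using assms unfolding unbounded_def by blast
  ultimately show False using lt_asym by blast
qed

lemma CardO: "Card_order r" using CO card_order_on_Card_order by blast
lemma r_iso: "|UNIV :: 'a set| =o r"
  using card_of_Field_ordIso[OF CardO] FLD by simp

lemma countable_small:
  assumes "countable KK" shows "|KK| <o r"
proof -
  have "|KK| \<le>o |UNIV :: nat set|"
    using assms unfolding countable_def card_of_ordLeq[symmetric] by blast
  moreover have "|UNIV :: nat set| <o |UNIV :: 'a set|"
  proof -
    have "\<not> |UNIV :: 'a set| \<le>o |UNIV :: nat set|"
      using UNC unfolding countable_def card_of_ordLeq[symmetric] by blast
    thus ?thesis using not_ordLeq_iff_ordLess[OF card_of_Well_order card_of_Well_order] by blast
  qed
  ultimately have "|KK| <o |UNIV :: 'a set|" by (rule ordLeq_ordLess_trans)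
  thus ?thesis using r_iso by (rule ordLess_ordIso_trans)
qed

lemma small_image: "|A| <o r \<Longrightarrow> |f ` A| <o r"
  using card_of_image[of f A] by (rule ordLeq_ordLess_trans)

lemma small_subset: "B \<subseteq> A \<Longrightarrow> |A| <o r \<Longrightarrow> |B| <o r"
  using card_of_mono1[of B A] by (rule ordLeq_ordLess_trans)

lemma small_insert: "|A :: 'a set| <o r \<Longrightarrow> |insert a A| <o r"
proof -
  assume "|A| <o r"
  then obtain c where c: "\<forall>b\<in>A. b \<prec> c" using small_bounded by blast
  obtain d where "a \<prec> d" "c \<prec> d"
  proof (cases "a \<prec> c")
    case True
    obtain d where "c \<prec> d" using nomax by blast
    thus ?thesis using that True lt_trans by blast
  next
    case False
    hence "(c,a) \<in> r" using not_lt by blast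
    obtain d where "a \<prec> d" using nomax by blast
    thus ?thesis using that \<open>(c,a) \<in> r\<close> le_lt_trans by blast
  qed
  have "insert a A \<subseteq> underS r d" using c \<open>a \<prec> d\<close> \<open>c \<prec> d\<close> lt_trans unfolding underS_eq by blast
  thus ?thesis using small_subset underS_card by blast
qed

definition sc :: "'a \<Rightarrow> 'a" where "sc a = (SOME b. a \<prec> b \<and> (\<forall>c. a \<prec> c \<longrightarrow> (b,c) \<in> r))"

lemma sc_prop: "a \<prec> sc a \<and> (\<forall>c. a \<prec> c \<longrightarrow> (sc a,c) \<in> r)"
proof -
  obtain b where "a \<prec> b" using nomax by blast
  then obtain m where "a \<prec> m \<and> (\<forall>c. a \<prec> c \<longrightarrow> (m,c) \<in> r)" using least_ex[of "\<lambda>x. a \<prec> x"] by blast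
  thus ?thesis unfolding sc_def by (rule someI)
qed

lemma lt_sc: "a \<prec> sc a" using sc_prop by blast
lemma sc_least: "a \<prec> c \<Longrightarrow> (sc a, c) \<in> r" using sc_prop by blast
lemma lt_sc_iff: "b \<prec> sc a \<longleftrightarrow> (b,a) \<in> r"
proof
  assume b: "b \<prec> sc a"
  show "(b,a) \<in> r"
  proof (rule ccontr)
    assume "(b,a) \<notin> r"
    hence "a \<prec> b" using not_lt by blast
    hence "(sc a, b) \<in> r" by (rule sc_least)
    thus False using b not_lt by blast
  qed
next
  assume "(b,a) \<in> r" thus "b \<prec> sc a" using lt_sc by (rule le_lt_trans)
qed
lemma underS_sc: "underS r (sc a) = insert a (underS r a)"
  unfolding underS_eq lt_sc_iff by (auto simp add: lt_def)

lemma ord_cases: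
  "underS r d = {} \<or> (\<exists>g. d = sc g) \<or> is_limit r d"
proof -
  { assume A: "underS r d \<noteq> {}" and B: "\<not> (\<exists>g. d = sc g)"
    have "is_limit r d" unfolding is_limit_def
    proof
      show "\<exists>b. b \<prec> d" using A unfolding underS_eq by auto
      show "\<forall>b. b \<prec> d \<longrightarrow> (\<exists>c. b \<prec> c \<and> c \<prec> d)"
      proof (intro allI impI)
        fix b assume "b \<prec> d"
        hence "(sc b, d) \<in> r" by (rule sc_least)
        moreover have "sc b \<noteq> d" using B by blast
        ultimately have "sc b \<prec> d" by (simp add: lt_def)
        thus "\<exists>c. b \<prec> c \<and> c \<prec> d" using lt_sc by blast
      qed
    qed }
  thus ?thesis by blast
qed

lemma limit_not_sc: "is_limit r d \<Longrightarrow> d \<noteq> sc g"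
proof
  assume L: "is_limit r d" and e: "d = sc g"
  have "g \<prec> d" using e lt_sc by simp
  then obtain c where "g \<prec> c" "c \<prec> d" using L unfolding is_limit_def by blast
  hence "(c,g) \<in> r" using e lt_sc_iff by simp
  thus False using \<open>g \<prec> c\<close> not_lt by blast
qed

end

context K begin

subsection \<open>Clubs\<close>

lemma closed_InterI:
  assumes "\<forall>C\<in>F. closed_set r C" shows "closed_set r (\<Inter>F)"
  unfolding closed_set_def
proof (intro allI impI)
  fix a assume H: "(\<exists>b. b \<prec> a) \<and> (\<forall>b. b \<prec> a \<longrightarrow> (\<exists>c\<in>\<Inter>F. b \<prec> c \<and> c \<prec> a))"
  show "a \<in> \<Inter>F"
  proof
    fix C assume "C \<in> F"
    hence "closed_set r C" using assms by blast
    moreover have "(\<exists>b. b \<prec> a) \<and> (\<forall>b. b \<prec> a \<longrightarrow> (\<exists>c\<in>C. b \<prec> c \<and> c \<prec> a))"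
      using H \<open>C \<in> F\<close> by blast
    ultimately show "a \<in> C" unfolding closed_set_def by blast
  qed
qed

lemma club_Inter:
  assumes F: "|F| <o r" and cl: "\<forall>C\<in>F. club r C"
  shows "club r (\<Inter>F)"
proof -
  have "closed_set r (\<Inter>F)" using cl closed_InterI unfolding club_def by blast
  moreover have "unbounded r (\<Inter>F)" unfolding unbounded_def
  proof
    fix a0
    define cc where "cc C b = (SOME c. c \<in> C \<and> b \<prec> c)" for C b
    have cc: "cc C b \<in> C \<and> b \<prec> cc C b" if "C \<in> F" for C b
    proof -
      have "\<exists>c. c \<in> C \<and> b \<prec> c" using cl that unfolding club_def unbounded_def by blast
      thus ?thesis unfolding cc_def by (rule someI_ex)
    qed
    define B where "B b = (SOME u. \<forall>x\<in>insert b ((\<lambda>C. cc C b) ` F). x \<prec> u)" for b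
    have B: "\<forall>x\<in>insert b ((\<lambda>C. cc C b) ` F). x \<prec> B b" for b
    proof -
      have "|insert b ((\<lambda>C. cc C b) ` F)| <o r" using small_insert small_image F by blast
      hence "\<exists>u. \<forall>x\<in>insert b ((\<lambda>C. cc C b) ` F). x \<prec> u" by (rule small_bounded)
      thus ?thesis unfolding B_def by (rule someI_ex)
    qed
    have B1: "b \<prec> B b" for b using B by blast
    have B2: "\<exists>c\<in>C. b \<prec> c \<and> c \<prec> B b" if "C \<in> F" for C b
      using B[of b] cc[OF that, of b] that by blast
    define s where "s n = (B ^^ n) a0" for n
    have s_suc: "s (Suc n) = B (s n)" for n unfolding s_def by simp
    have "|range s| <o r" by (rule countable_small) simp
    then obtain u0 where "\<forall>x\<in>range s. x \<prec> u0" using small_bounded by blast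
    hence "(\<lambda>u. \<forall>n. s n \<prec> u) u0" by simp
    from least_ex[where P="\<lambda>u. \<forall>n. s n \<prec> u", OF this] obtain g where g: "\<forall>n. s n \<prec> g" and gmin: "\<forall>u. (\<forall>n. s n \<prec> u) \<longrightarrow> (g,u) \<in> r"
      by blast
    have sup: "\<exists>n. b \<prec> s n" if "b \<prec> g" for b
    proof (rule ccontr)
      assume "\<not> (\<exists>n. b \<prec> s n)"
      hence le: "(s n, b) \<in> r" for n using not_lt by blast
      have "s n \<prec> b" for n using le[of "Suc n"] B1[of "s n"] s_suc[of n] lt_le_trans by simp
      hence "(g,b) \<in> r" using gmin by blast
      thus False using that not_lt by blast
    qed
    have "g \<in> \<Inter>F"
    proof
      fix C assume C: "C \<in> F"
      have "closed_set r C" using cl C unfolding club_def by blast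
      moreover have "\<forall>b. b \<prec> g \<longrightarrow> (\<exists>c\<in>C. b \<prec> c \<and> c \<prec> g)"
      proof (intro allI impI)
        fix b assume "b \<prec> g"
        then obtain n where n: "b \<prec> s n" using sup by blast
        obtain c where c: "c \<in> C" "s n \<prec> c" "c \<prec> B (s n)" using B2[OF C] by blast
        have "c \<prec> g" using c(3) g[rule_format, of "Suc n"] s_suc[of n] lt_trans by simp
        moreover have "b \<prec> c" using n c(2) lt_trans by blast
        ultimately show "\<exists>c\<in>C. b \<prec> c \<and> c \<prec> g" using c(1) by blast
      qed
      moreover have "\<exists>b. b \<prec> g" using g by blast
      ultimately show "g \<in> C" unfolding closed_set_def by blast
    qed
    moreover have "a0 \<prec> g" using g[rule_format, of 0] unfolding s_def by simp
    ultimately show "\<exists>b\<in>\<Inter>F. a0 \<prec> b" by blast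
  qed
  ultimately show ?thesis unfolding club_def by blast
qed

lemma club_Int: "club r A \<Longrightarrow> club r B \<Longrightarrow> club r (A \<inter> B)"
  using club_Inter[of "{A,B}"] countable_small[of "{A,B}"] by simp

lemma club_UNIV: "club r UNIV"
  unfolding club_def closed_set_def unbounded_def using nomax by blast

lemma club_tail: "club r {b. (a,b) \<in> r}"
  unfolding club_def closed_set_def unbounded_def
proof (intro conjI allI impI)
  fix c assume H: "(\<exists>b. b \<prec> c) \<and> (\<forall>b. b \<prec> c \<longrightarrow> (\<exists>d\<in>{b. (a, b) \<in> r}. b \<prec> d \<and> d \<prec> c))"
  show "c \<in> {b. (a, b) \<in> r}"
  proof (rule ccontr)
    assume "c \<notin> {b. (a, b) \<in> r}"
    hence "c \<prec> a" using not_lt by blast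
    obtain b where "b \<prec> c" using H by blast
    then obtain d where "(a,d) \<in> r" "d \<prec> c" using H by blast
    thus False using \<open>c \<prec> a\<close> lt_asym le_lt_trans by blast
  qed
next
  fix c
  obtain d where "a \<prec> d" "c \<prec> d"
  proof (cases "a \<prec> c")
    case True
    obtain d where "c \<prec> d" using nomax by blast
    thus ?thesis using that True lt_trans by blast
  next
    case False
    hence "(c,a) \<in> r" using not_lt by blast
    obtain d where "a \<prec> d" using nomax by blast
    thus ?thesis using that \<open>(c,a) \<in> r\<close> le_lt_trans by blast
  qed
  thus "\<exists>b\<in>{b. (a, b) \<in> r}. c \<prec> b" using lt_imp_le by blast
qed

lemma club_unbounded: "club r C \<Longrightarrow> \<exists>b\<in>C. a \<prec> b"
  unfolding club_def unbounded_def by blast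

lemma club_two: "club r C \<Longrightarrow> \<exists>b c. b \<in> C \<and> c \<in> C \<and> b \<noteq> c"
proof -
  assume "club r C"
  then obtain b where b: "b \<in> C" using club_unbounded by blast
  then obtain c where "c \<in> C" "b \<prec> c" using club_unbounded \<open>club r C\<close> by blast
  moreover have "b \<noteq> c" using \<open>b \<prec> c\<close> lt_irrefl by (metis)
  ultimately show ?thesis using b by blast
qed

lemma not_club_le1: "club r C \<Longrightarrow> C \<subseteq> {b} \<Longrightarrow> False"
  using club_two by blast

end

context K begin

subsection \<open>Nodes\<close>

definition len :: "('a \<Rightarrow> 'a option) \<Rightarrow> 'a" where
  "len t = (THE d. dom t = underS r d)"

definition rs :: "('a \<Rightarrow> 'a option) \<Rightarrow> 'a \<Rightarrow> ('a \<Rightarrow> 'a option)" where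
  "rs t a = t |` underS r a"

definition ext :: "('a \<Rightarrow> 'a option) \<Rightarrow> 'a \<Rightarrow> ('a \<Rightarrow> 'a option)" where
  "ext t b = t(len t \<mapsto> b)"

lemma len_eq: "dom t = underS r d \<Longrightarrow> len t = d"
  unfolding len_def using underS_inj by (intro the_equality) auto

lemma Seqs_iff: "t \<in> Seqs r \<longleftrightarrow> dom t = underS r (len t)"
  unfolding Seqs_def using len_eq by auto

lemma SeqsI: "dom t = underS r d \<Longrightarrow> t \<in> Seqs r"
  unfolding Seqs_def by blast

lemma Seqs_dom: "t \<in> Seqs r \<Longrightarrow> dom t = underS r (len t)"
  using Seqs_iff by blast

lemma dom_rs: "t \<in> Seqs r \<Longrightarrow> (a, len t) \<in> r \<Longrightarrow> dom (rs t a) = underS r a"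
proof -
  assume t: "t \<in> Seqs r" and a: "(a, len t) \<in> r"
  have "dom t = underS r (len t)" using Seqs_dom[OF t] .
  moreover have "underS r a \<subseteq> underS r (len t)" using underS_mono[OF a] .
  ultimately show ?thesis unfolding rs_def dom_restrict by blast
qed

lemma rs_Seqs: "t \<in> Seqs r \<Longrightarrow> (a, len t) \<in> r \<Longrightarrow> rs t a \<in> Seqs r"
  using dom_rs SeqsI by blast

lemma len_rs: "t \<in> Seqs r \<Longrightarrow> (a, len t) \<in> r \<Longrightarrow> len (rs t a) = a"
  using dom_rs len_eq by blast

lemma rs_rs: "(a,b) \<in> r \<Longrightarrow> rs (rs t b) a = rs t a"
  unfolding rs_def using underS_mono by (auto simp: restrict_map_def fun_eq_iff)

lemma rs_full: "t \<in> Seqs r \<Longrightarrow> (len t, a) \<in> r \<Longrightarrow> rs t a = t"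
proof -
  assume t: "t \<in> Seqs r" and a: "(len t, a) \<in> r"
  have "dom t \<subseteq> underS r a" using Seqs_dom[OF t] underS_mono[OF a] by simp
  show ?thesis
  proof
    fix z show "rs t a z = t z"
    proof (cases "z \<in> underS r a")
      case False
      hence "z \<notin> dom t" using \<open>dom t \<subseteq> underS r a\<close> by blast
      thus ?thesis using False unfolding rs_def by (simp add: domIff)
    qed (simp add: rs_def)
  qed
qed

lemma rs_len: "t \<in> Seqs r \<Longrightarrow> rs t (len t) = t"
  using rs_full by simp

lemma rs_le: "rs t a \<subseteq>\<^sub>m t"
  unfolding rs_def map_le_def by auto

lemma map_le_iff:
  assumes s: "s \<in> Seqs r" and t: "t \<in> Seqs r"
  shows "s \<subseteq>\<^sub>m t \<longleftrightarrow> (len s, len t) \<in> r \<and> s = rs t (len s)"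
proof
  assume le: "s \<subseteq>\<^sub>m t"
  have sub: "underS r (len s) \<subseteq> underS r (len t)"
    using map_le_implies_dom_le[OF le] Seqs_dom[OF s] Seqs_dom[OF t] by simp
  have L: "(len s, len t) \<in> r"
  proof (rule ccontr)
    assume "(len s, len t) \<notin> r"
    hence "len t \<prec> len s" using not_lt by blast
    hence "len t \<in> underS r (len s)" unfolding underS_eq by simp
    hence "len t \<in> underS r (len t)" using sub by blast
    thus False unfolding underS_eq by simp
  qed
  have "s = rs t (len s)"
  proof
    fix z show "s z = rs t (len s) z"
    proof (cases "z \<in> underS r (len s)")
      case True
      hence "z \<in> dom s" using Seqs_dom[OF s] by simp
      hence "s z = t z" using le unfolding map_le_def by blast
      thus ?thesis using True unfolding rs_def by simp
    next
      case False
      hence "z \<notin> dom s" using Seqs_dom[OF s] by simp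
      thus ?thesis using False unfolding rs_def by auto
    qed
  qed
  thus "(len s, len t) \<in> r \<and> s = rs t (len s)" using L by blast
next
  assume "(len s, len t) \<in> r \<and> s = rs t (len s)"
  thus "s \<subseteq>\<^sub>m t" using rs_le by metis
qed

lemma map_le_len: "s \<in> Seqs r \<Longrightarrow> t \<in> Seqs r \<Longrightarrow> s \<subseteq>\<^sub>m t \<Longrightarrow> (len s, len t) \<in> r"
  using map_le_iff by blast

lemma map_le_rs: "s \<in> Seqs r \<Longrightarrow> t \<in> Seqs r \<Longrightarrow> s \<subseteq>\<^sub>m t \<Longrightarrow> s = rs t (len s)"
  using map_le_iff by blast

lemma map_le_eq_len: "s \<in> Seqs r \<Longrightarrow> t \<in> Seqs r \<Longrightarrow> s \<subseteq>\<^sub>m t \<Longrightarrow> len s = len t \<Longrightarrow> s = t"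
  using map_le_rs rs_len by metis

lemma rs_mono: "t \<in> Seqs r \<Longrightarrow> (a,b) \<in> r \<Longrightarrow> (b, len t) \<in> r \<Longrightarrow> rs t a \<subseteq>\<^sub>m rs t b"
  using rs_rs rs_le by metis

lemma Seqs_comparable:
  assumes s: "s \<in> Seqs r" and t: "t \<in> Seqs r" and u: "u \<in> Seqs r"
    and su: "s \<subseteq>\<^sub>m u" and tu: "t \<subseteq>\<^sub>m u"
  shows "s \<subseteq>\<^sub>m t \<or> t \<subseteq>\<^sub>m s"
proof -
  have e1: "s = rs u (len s)" and e2: "t = rs u (len t)"
    using map_le_rs s t u su tu by blast+
  have l1: "(len s, len u) \<in> r" and l2: "(len t, len u) \<in> r"
    using map_le_len s t u su tu by blast+
  show ?thesis
  proof (cases "(len s, len t) \<in> r")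
    case True
    hence "rs u (len s) \<subseteq>\<^sub>m rs u (len t)" using rs_mono u l2 by blast
    thus ?thesis using e1 e2 by simp
  next
    case False
    hence "(len t, len s) \<in> r" using le_total by blast
    hence "rs u (len t) \<subseteq>\<^sub>m rs u (len s)" using rs_mono u l1 by blast
    thus ?thesis using e1 e2 by simp
  qed
qed

lemma dom_ext: "t \<in> Seqs r \<Longrightarrow> dom (ext t b) = underS r (sc (len t))"
  unfolding ext_def using Seqs_dom underS_sc by simp

lemma ext_Seqs: "t \<in> Seqs r \<Longrightarrow> ext t b \<in> Seqs r"
  using dom_ext SeqsI by blast

lemma len_ext: "t \<in> Seqs r \<Longrightarrow> len (ext t b) = sc (len t)"
  using dom_ext len_eq by blast

lemma rs_ext: "t \<in> Seqs r \<Longrightarrow> rs (ext t b) (len t) = t"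
proof -
  assume t: "t \<in> Seqs r"
  show ?thesis
  proof
    fix z show "rs (ext t b) (len t) z = t z"
      using Seqs_dom[OF t] unfolding rs_def ext_def underS_eq
      by (cases "z \<prec> len t") (auto simp: domIff)
  qed
qed

lemma ext_at: "ext t b (len t) = Some b"
  unfolding ext_def by simp

lemma le_ext: "t \<in> Seqs r \<Longrightarrow> t \<subseteq>\<^sub>m ext t b"
  using rs_ext rs_le by metis

lemma ext_neq: "t \<in> Seqs r \<Longrightarrow> ext t b \<noteq> t"
proof
  assume t: "t \<in> Seqs r" and "ext t b = t"
  hence "len t \<in> dom t" using ext_at by (metis domI)
  thus False using Seqs_dom[OF t] unfolding underS_eq by simp
qed

lemma ext_inj: "ext t b = ext t c \<Longrightarrow> b = c"
  using ext_at by (metis option.inject)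

lemma succ_set_eq: "t \<in> Seqs r \<Longrightarrow> succ_set r t p = {b. ext t b \<in> p}"
proof -
  assume t: "t \<in> Seqs r"
  have "dom t = underS r d \<longleftrightarrow> d = len t" for d
    using Seqs_dom[OF t] underS_inj by metis
  thus ?thesis unfolding succ_set_def ext_def by simp
qed

lemma sc_node:
  assumes t: "t \<in> Seqs r" and l: "len t = sc g"
  shows "\<exists>b. t = ext (rs t g) b"
proof -
  have gl: "(g, len t) \<in> r" using l lt_sc lt_imp_le by simp
  have g_in: "g \<in> dom t" using Seqs_dom[OF t] l lt_sc unfolding underS_eq by simp
  then obtain b where b: "t g = Some b" by blast
  have lr: "len (rs t g) = g" using len_rs t gl by blast
  have "t = ext (rs t g) b"
  proof
    fix z
    show "t z = ext (rs t g) b z"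
    proof (cases "z = g")
      case True thus ?thesis using b lr unfolding ext_def by simp
    next
      case False
      have "z \<in> underS r g \<longleftrightarrow> z \<in> dom t"
        using Seqs_dom[OF t] l underS_sc False by auto
      thus ?thesis using False lr unfolding ext_def rs_def by (auto simp: domIff)
    qed
  qed
  thus ?thesis by blast
qed

lemma dom_restr: "dom (restr r x a) = underS r a"
  unfolding restr_def by auto

lemma restr_Seqs: "restr r x a \<in> Seqs r"
  using dom_restr SeqsI by blast

lemma len_restr: "len (restr r x a) = a"
  using dom_restr len_eq by blast

lemma rs_restr: "(a,b) \<in> r \<Longrightarrow> rs (restr r x b) a = restr r x a"
  unfolding rs_def restr_def using underS_mono by (auto simp: restrict_map_def fun_eq_iff)

lemma restr_mono: "(a,b) \<in> r \<Longrightarrow> restr r x a \<subseteq>\<^sub>m restr r x b"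
  using rs_restr rs_le by metis

lemma restr_sc: "restr r x (sc a) = ext (restr r x a) (x a)"
proof
  fix z show "restr r x (sc a) z = ext (restr r x a) (x a) z"
    unfolding ext_def len_restr unfolding restr_def underS_sc by (auto simp: restrict_map_def underS_eq)
qed

lemma le_restr_iff:
  assumes s: "s \<in> Seqs r" and l: "(len s, b) \<in> r"
  shows "s \<subseteq>\<^sub>m restr r x b \<longleftrightarrow> s = restr r x (len s)"
  using map_le_iff[OF s restr_Seqs] l len_restr rs_restr by metis

lemma tree_Seqs: "is_tree r p \<Longrightarrow> t \<in> p \<Longrightarrow> t \<in> Seqs r"
  unfolding is_tree_def by blast

lemma tree_rs: "is_tree r p \<Longrightarrow> t \<in> p \<Longrightarrow> (a, len t) \<in> r \<Longrightarrow> rs t a \<in> p"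
  unfolding is_tree_def using rs_Seqs rs_le by blast

lemma tree_le: "is_tree r p \<Longrightarrow> t \<in> p \<Longrightarrow> s \<in> Seqs r \<Longrightarrow> s \<subseteq>\<^sub>m t \<Longrightarrow> s \<in> p"
  unfolding is_tree_def by blast

lemma branch_in: "x \<in> branches r p \<Longrightarrow> restr r x a \<in> p"
  unfolding branches_def by blast

definition z0 :: 'a where "z0 = (SOME z. \<forall>b. (z,b) \<in> r)"

lemma z0_least: "(z0, b) \<in> r"
proof -
  obtain m where "\<forall>b. (m,b) \<in> r" using least_ex[where P="\<lambda>x. True"] by blast
  hence "\<forall>b. (z0,b) \<in> r" unfolding z0_def by (rule someI)
  thus ?thesis by blast
qed

lemma underS_z0: "underS r z0 = {}"
  unfolding underS_eq using z0_least not_lt by blast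

lemma underS_empty: "underS r d = {} \<Longrightarrow> d = z0"
  using underS_z0 underS_inj by simp

lemma root_Seqs: "Map.empty \<in> Seqs r"
  using underS_z0 SeqsI[of Map.empty z0] by simp

lemma len_root: "len Map.empty = z0"
  using underS_z0 len_eq[of Map.empty z0] by simp

lemma root_le: "Map.empty \<subseteq>\<^sub>m t"
  unfolding map_le_def by simp

lemma tree_root: "is_tree r p \<Longrightarrow> Map.empty \<in> p"
proof -
  assume T: "is_tree r p"
  then obtain t where "t \<in> p" unfolding is_tree_def by blast
  thus ?thesis using tree_le[OF T _ root_Seqs root_le] by blast
qed

end

context K begin

lemma restrict_le_rs:
  assumes "t \<subseteq>\<^sub>m U" and "underS r a \<subseteq> dom t"
  shows "U |` underS r a = rs t a"
proof
  fix z show "(U |` underS r a) z = rs t a z"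
  proof (cases "z \<in> underS r a")
    case True
    hence "z \<in> dom t" using assms(2) by blast
    hence "U z = t z" using assms(1) unfolding map_le_def by metis
    thus ?thesis using True unfolding rs_def by simp
  qed (simp add: rs_def)
qed

lemma branch_through:
  assumes T: "is_tree r p" and Pr: "pruned r p" and Cl: "lt_kappa_closed r p" and s: "s \<in> p"
  shows "\<exists>x\<in>branches r p. restr r x (len s) = s"
proof (rule ccontr)
  assume NB: "\<not> (\<exists>x\<in>branches r p. restr r x (len s) = s)"
  define P where "P = {t\<in>p. s \<subseteq>\<^sub>m t}"
  define R where "R = {(u,v). u \<in> P \<and> v \<in> P \<and> u \<subseteq>\<^sub>m v}"
  have sP: "s \<in> P" unfolding P_def using s by simp
  have FR: "Field R = P" unfolding R_def Field_def by auto
  have PO: "Partial_order R" unfolding FR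
    unfolding partial_order_on_def preorder_on_def refl_on_def trans_def antisym_def
  proof (intro conjI ballI allI impI)
    show "R \<subseteq> P \<times> P" unfolding R_def by auto
    show "\<And>x. x \<in> P \<Longrightarrow> (x, x) \<in> R" unfolding R_def by simp
    show "\<And>x y z. (x, y) \<in> R \<Longrightarrow> (y, z) \<in> R \<Longrightarrow> (x, z) \<in> R"
      unfolding R_def using map_le_trans by blast
    show "\<And>x y. (x, y) \<in> R \<Longrightarrow> (y, x) \<in> R \<Longrightarrow> x = y"
      unfolding R_def using map_le_antisym by blast
  qed
  have PS: "t \<in> Seqs r" if "t \<in> P" for t using that tree_Seqs[OF T] unfolding P_def by blast
  have UB: "\<exists>u\<in>Field R. \<forall>a\<in>C. (a, u) \<in> R" if C: "C \<in> Chains R" for C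
  proof (cases "C = {}")
    case True thus ?thesis using sP FR by blast
  next
    case False
    have CP: "C \<subseteq> P" using C unfolding Chains_def R_def by blast
    have comp: "a \<subseteq>\<^sub>m b \<or> b \<subseteq>\<^sub>m a" if "a \<in> C" "b \<in> C" for a b
      using C that unfolding Chains_def R_def by blast
    define U where "U z = (if \<exists>t\<in>C. z \<in> dom t then (SOME t. t \<in> C \<and> z \<in> dom t) z else None)" for z
    have tU: "t \<subseteq>\<^sub>m U" if "t \<in> C" for t
      unfolding map_le_def
    proof
      fix z assume z: "z \<in> dom t"
      define t' where "t' = (SOME t. t \<in> C \<and> z \<in> dom t)"
      have t': "t' \<in> C \<and> z \<in> dom t'" unfolding t'_def
      proof (rule someI[where x=t])
        show "t \<in> C \<and> z \<in> dom t" using z that by blast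
      qed
      have ex: "\<exists>t\<in>C. z \<in> dom t" using z that by blast
      have "U z = t' z" unfolding U_def t'_def using ex by (simp only: if_True)
      moreover have "t z = t' z"
      proof -
        have "t \<subseteq>\<^sub>m t' \<or> t' \<subseteq>\<^sub>m t" using comp[OF that] t' by blast
        moreover have "t \<subseteq>\<^sub>m t' \<Longrightarrow> t z = t' z" using z unfolding map_le_def by simp
        moreover have "t' \<subseteq>\<^sub>m t \<Longrightarrow> t' z = t z" using t' unfolding map_le_def by simp
        ultimately show ?thesis by metis
      qed
      ultimately show "t z = U z" by simp
    qed
    define D where "D = (\<Union>t\<in>C. underS r (len t))"
    have domU: "dom U = D"
    proof
      show "dom U \<subseteq> D"
      proof
        fix z assume "z \<in> dom U"
        hence "\<exists>t\<in>C. z \<in> dom t" unfolding U_def by (auto split: if_splits)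
        then obtain t where t: "t \<in> C" "z \<in> dom t" by blast
        have "t \<in> Seqs r" using PS t(1) CP by blast
        hence "z \<in> underS r (len t)" using Seqs_dom t(2) by blast
        thus "z \<in> D" unfolding D_def using t(1) by blast
      qed
      show "D \<subseteq> dom U"
      proof
        fix z assume "z \<in> D"
        then obtain t where t: "t \<in> C" "z \<in> underS r (len t)" unfolding D_def by blast
        have "t \<in> Seqs r" using PS t(1) CP by blast
        hence "z \<in> dom t" using Seqs_dom t(2) by blast
        hence "t \<in> C" "z \<in> dom t" using t by auto
        thus "z \<in> dom U" using tU map_le_implies_dom_le by blast
      qed
    qed
    have Dd: "b \<in> D" if "b \<prec> a" "a \<in> D" for a b
      using that lt_trans unfolding D_def underS_eq by blast
    have rsU: "U |` underS r a = rs t a" if "t \<in> C" "a \<prec> len t" for t a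
    proof -
      have "underS r a \<subseteq> dom t"
        using Seqs_dom[OF PS] that CP underS_mono[of a "len t"] lt_imp_le by blast
      thus ?thesis using restrict_le_rs tU that by blast
    qed
    obtain t0 where t0: "t0 \<in> C" using False by blast
    have sU: "s \<subseteq>\<^sub>m U" using tU[OF t0] t0 CP unfolding P_def using map_le_trans by blast
    show ?thesis
    proof (cases "\<forall>a. a \<in> D")
      case True
      define x where "x a = the (U a)" for a
      have Ux: "Some \<circ> x = U"
      proof
        fix a have "a \<in> dom U" using True domU by simp
        thus "(Some \<circ> x) a = U a" unfolding x_def by auto
      qed
      have "x \<in> branches r p" unfolding branches_def mem_Collect_eq
      proof (intro allI)
        fix a
        obtain t where t: "t \<in> C" "a \<prec> len t" using True unfolding D_def underS_eq by blast
        have "restr r x a = rs t a" unfolding restr_def Ux using rsU t by blast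
        moreover have "rs t a \<in> p" using tree_rs[OF T] t CP lt_imp_le unfolding P_def by blast
        ultimately show "restr r x a \<in> p" by simp
      qed
      moreover have "restr r x (len s) = s"
      proof -
        have "underS r (len s) \<subseteq> dom s" using Seqs_dom PS sP by blast
        hence "U |` underS r (len s) = rs s (len s)" using restrict_le_rs sU by blast
        thus ?thesis unfolding restr_def Ux using rs_len PS sP by simp
      qed
      ultimately show ?thesis using NB by blast
    next
      case False
      then obtain a1 where "a1 \<notin> D" by blast
      then obtain d where d: "d \<notin> D" and dmin: "\<forall>b. b \<notin> D \<longrightarrow> (d,b) \<in> r"
        using least_ex[where P="\<lambda>b. b \<notin> D"] by blast
      have DU: "D = underS r d"
      proof
        show "D \<subseteq> underS r d"
        proof
          fix b assume b: "b \<in> D"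
          show "b \<in> underS r d"
          proof (rule ccontr)
            assume "b \<notin> underS r d"
            hence "(d,b) \<in> r" unfolding underS_eq using not_lt by blast
            hence "d = b \<or> d \<prec> b" unfolding lt_def by blast
            thus False using Dd[of d b] b d by blast
          qed
        qed
        show "underS r d \<subseteq> D" unfolding underS_eq using dmin not_lt by blast
      qed
      have USeq: "U \<in> Seqs r" using domU DU SeqsI by blast
      have lenU: "len U = d" using domU DU len_eq by blast
      have lens: "(len t, d) \<in> r" if "t \<in> C" for t
      proof (rule ccontr)
        assume "(len t, d) \<notin> r"
        hence "d \<prec> len t" using not_lt by blast
        hence "d \<in> D" unfolding D_def underS_eq using that by blast
        thus False using d by blast
      qed
      have "U \<in> P"
      proof (cases "\<exists>t\<in>C. len t = d")
        case True
        then obtain t where t: "t \<in> C" "len t = d" by blast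
        have tS: "t \<in> Seqs r" using PS t CP by blast
        have "t = U" using map_le_eq_len[OF tS USeq tU[OF t(1)]] t(2) lenU by simp
        thus ?thesis using t CP by blast
      next
        case False
        have ltd: "len t \<prec> d" if "t \<in> C" for t
        proof -
          have "len t \<noteq> d" using False that by blast
          thus ?thesis using lens[OF that] by (simp add: lt_def)
        qed
        have lim: "is_limit r d"
        proof -
          have "underS r d \<noteq> {}" using ltd[OF t0] unfolding underS_eq by blast
          moreover have "\<not> (\<exists>g. d = sc g)"
          proof
            assume "\<exists>g. d = sc g"
            then obtain g where g: "d = sc g" by blast
            have "g \<in> underS r d" using g lt_sc unfolding underS_eq by simp
            hence "g \<in> D" using DU by simp
            then obtain t where t: "t \<in> C" "g \<prec> len t" unfolding D_def underS_eq by blast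
            have "(d, len t) \<in> r" using sc_least[OF t(2)] g by simp
            thus False using ltd[OF t(1)] not_lt by blast
          qed
          ultimately show ?thesis using ord_cases[of d] by blast
        qed
        have "\<forall>a. a \<prec> d \<longrightarrow> U |` underS r a \<in> p"
        proof (intro allI impI)
          fix a assume "a \<prec> d"
          hence "a \<in> underS r d" unfolding underS_eq by simp
          hence "a \<in> D" using DU by simp
          then obtain t where t: "t \<in> C" "a \<prec> len t" unfolding D_def underS_eq by blast
          have "rs t a \<in> p" using tree_rs[OF T] t CP lt_imp_le unfolding P_def by blast
          thus "U |` underS r a \<in> p" using rsU t by simp
        qed
        moreover have "dom U = underS r d" using domU DU by simp
        ultimately have "U \<in> p" using Cl[unfolded lt_kappa_closed_def, rule_format, of U d] lim by blast
        thus ?thesis using sU unfolding P_def by blast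
      qed
      thus ?thesis using tU FR unfolding R_def using CP by blast
    qed
  qed
  obtain m where m: "m \<in> Field R" and mmax: "\<forall>a\<in>Field R. (m, a) \<in> R \<longrightarrow> a = m"
    using Zorns_po_lemma[OF PO UB] by blast
  have mP: "m \<in> P" using m FR by simp
  then obtain t where t: "t \<in> p" "m \<subseteq>\<^sub>m t" "m \<noteq> t" using Pr unfolding pruned_def P_def by blast
  have "t \<in> P" using t mP map_le_trans unfolding P_def by blast
  hence "(m,t) \<in> R" unfolding R_def using mP t by blast
  thus False using mmax \<open>t \<in> P\<close> FR t(3) by blast
qed

end

context K begin

subsection \<open>Conditions\<close>

lemma MClubI:
  assumes T: "is_tree r p" and Pr: "pruned r p" and Cl: "lt_kappa_closed r p"
    and B: "\<forall>x\<in>branches r p. club r {a. club_splitting r p (restr r x a)}"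
  shows "p \<in> MClub r"
proof -
  have "\<exists>t\<in>p. s \<subseteq>\<^sub>m t \<and> club_splitting r p t" if s: "s \<in> p" for s
  proof -
    obtain x where x: "x \<in> branches r p" "restr r x (len s) = s"
      using branch_through[OF T Pr Cl s] by blast
    obtain a where a: "club_splitting r p (restr r x a)" "len s \<prec> a"
      using club_unbounded[OF B[rule_format, OF x(1)]] by blast
    have "s \<subseteq>\<^sub>m restr r x a" using restr_mono[OF lt_imp_le[OF a(2)], of x] x(2) by simp
    moreover have "restr r x a \<in> p" using branch_in[OF x(1)] .
    ultimately show ?thesis using a(1) by blast
  qed
  thus ?thesis unfolding MClub_def using assms by blast
qed

lemma MClub_tree: "p \<in> MClub r \<Longrightarrow> is_tree r p" unfolding MClub_def by blast
lemma MClub_pruned: "p \<in> MClub r \<Longrightarrow> pruned r p" unfolding MClub_def by blast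
lemma MClub_closed: "p \<in> MClub r \<Longrightarrow> lt_kappa_closed r p" unfolding MClub_def by blast
lemma MClub_branch: "p \<in> MClub r \<Longrightarrow> x \<in> branches r p \<Longrightarrow> club r {a. club_splitting r p (restr r x a)}"
  unfolding MClub_def by blast

lemma branches_mono: "q \<subseteq> p \<Longrightarrow> branches r q \<subseteq> branches r p"
  unfolding branches_def by blast

lemma succ_ne:
  assumes T: "is_tree r p" and Pr: "pruned r p" and t: "t \<in> p"
  shows "\<exists>b. ext t b \<in> p"
proof -
  have tS: "t \<in> Seqs r" using tree_Seqs[OF T t] .
  obtain u where u: "u \<in> p" "t \<subseteq>\<^sub>m u" "t \<noteq> u" using Pr t unfolding pruned_def by blast
  have uS: "u \<in> Seqs r" using tree_Seqs[OF T u(1)] .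
  have l: "(len t, len u) \<in> r" and e: "t = rs u (len t)" using map_le_iff[OF tS uS] u(2) by blast+
  have "len t \<noteq> len u" using e rs_len[OF uS] u(3) by metis
  hence lt: "len t \<prec> len u" using l by (simp add: lt_def)
  have sl: "(sc (len t), len u) \<in> r" using sc_least[OF lt] .
  define v where "v = rs u (sc (len t))"
  have vS: "v \<in> Seqs r" and lv: "len v = sc (len t)" unfolding v_def using rs_Seqs len_rs uS sl by blast+
  obtain b where b: "v = ext (rs v (len t)) b" using sc_node[OF vS lv] by blast
  have "rs v (len t) = t" unfolding v_def using rs_rs[OF lt_imp_le[OF lt_sc]] e by simp
  hence "v = ext t b" using b by simp
  moreover have "v \<in> p" unfolding v_def using tree_rs[OF T u(1) sl] .
  ultimately show ?thesis by blast
qed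

lemma prunedI:
  assumes T: "is_tree r p" and S: "\<forall>t\<in>p. \<exists>b. ext t b \<in> p"
  shows "pruned r p"
  unfolding pruned_def
proof
  fix t assume t: "t \<in> p"
  then obtain b where "ext t b \<in> p" using S by blast
  moreover have "t \<subseteq>\<^sub>m ext t b" "ext t b \<noteq> t" using le_ext ext_neq tree_Seqs[OF T t] by blast+
  ultimately show "\<exists>u\<in>p. t \<subseteq>\<^sub>m u \<and> t \<noteq> u" by metis
qed

definition normal :: "('a \<Rightarrow> 'a option) set \<Rightarrow> bool" where
  "normal p \<longleftrightarrow> (\<forall>t\<in>p. club r (succ_set r t p) \<or> (\<exists>b. succ_set r t p = {b}))"

definition NC :: "('a \<Rightarrow> 'a option) set set" where
  "NC = {p \<in> MClub r. normal p}"

lemma NC_MClub: "p \<in> NC \<Longrightarrow> p \<in> MClub r" unfolding NC_def by blast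
lemma NC_normal: "p \<in> NC \<Longrightarrow> normal p" unfolding NC_def by blast

lemma normal_split:
  "normal p \<Longrightarrow> t \<in> p \<Longrightarrow> club r (succ_set r t p) \<or> (\<exists>b. succ_set r t p = {b})"
  unfolding normal_def by blast

lemma succ_sub: "t \<in> Seqs r \<Longrightarrow> q \<subseteq> p \<Longrightarrow> succ_set r t q \<subseteq> succ_set r t p"
  using succ_set_eq by auto

lemma normal_club_mono:
  assumes N: "normal p" and t: "t \<in> p" and C: "club r C" and sub: "C \<subseteq> succ_set r t p"
  shows "club r (succ_set r t p)"
proof -
  { fix b assume "succ_set r t p = {b}"
    hence False using not_club_le1[OF C] sub by blast }
  thus ?thesis using normal_split[OF N t] by blast
qed

subsection \<open>Intersections of small chains\<close>

lemma chain_Inter: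
  assumes Fne: "F \<noteq> {}" and FN: "F \<subseteq> NC" and Fs: "|F| <o r"
    and ch: "\<forall>a\<in>F. \<forall>b\<in>F. a \<subseteq> b \<or> b \<subseteq> a"
  shows "\<Inter>F \<in> NC"
proof -
  define Q where "Q = \<Inter>F"
  have TF: "is_tree r p" if "p \<in> F" for p using FN that NC_MClub MClub_tree by blast
  have QS: "Q \<subseteq> Seqs r" unfolding Q_def using Fne TF unfolding is_tree_def by blast
  have TQ: "is_tree r Q" unfolding is_tree_def
  proof (intro conjI ballI impI)
    show "Q \<noteq> {}" unfolding Q_def using tree_root TF by blast
    show "Q \<subseteq> Seqs r" using QS .
    show "s \<in> Q" if "t \<in> Q" "s \<in> Seqs r" "s \<subseteq>\<^sub>m t" for t s
      using that tree_le TF unfolding Q_def by blast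
  qed
  have succQ: "succ_set r t Q = (\<Inter>p\<in>F. succ_set r t p)" if "t \<in> Seqs r" for t
    using succ_set_eq[OF that] unfolding Q_def by auto
  have key: "(club r (succ_set r t Q) \<longleftrightarrow> (\<forall>p\<in>F. club r (succ_set r t p))) \<and>
             (club r (succ_set r t Q) \<or> (\<exists>b. succ_set r t Q = {b}))" if t: "t \<in> Q" for t
  proof (cases "\<forall>p\<in>F. club r (succ_set r t p)")
    case True
    have "|(\<lambda>p. succ_set r t p) ` F| <o r" using small_image Fs by blast
    hence "club r (\<Inter>((\<lambda>p. succ_set r t p) ` F))" using club_Inter True by blast
    hence "club r (succ_set r t Q)" using succQ t QS by auto
    thus ?thesis using True by blast
  next
    case False
    then obtain p0 where p0: "p0 \<in> F" "\<not> club r (succ_set r t p0)" by blast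
    have tp: "t \<in> p" if "p \<in> F" for p using t that unfolding Q_def by blast
    obtain b where b: "succ_set r t p0 = {b}"
      using normal_split[OF NC_normal tp] p0 FN by blast
    have tS: "t \<in> Seqs r" using t QS by blast
    have "b \<in> succ_set r t p" if p: "p \<in> F" for p
    proof (cases "p0 \<subseteq> p")
      case True thus ?thesis using succ_sub[OF tS True] b by blast
    next
      case False
      hence "p \<subseteq> p0" using ch p p0 by blast
      hence sub: "succ_set r t p \<subseteq> {b}" using succ_sub[OF tS] b by blast
      have "p \<in> MClub r" using FN p NC_MClub by blast
      then obtain c where "ext t c \<in> p" using succ_ne MClub_tree MClub_pruned tp[OF p] by blast
      hence "c \<in> succ_set r t p" using succ_set_eq[OF tS] by blast
      thus ?thesis using sub by blast
    qed
    hence "succ_set r t Q = {b}" using succQ[OF tS] b p0 by blast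
    moreover have "\<not> club r {b}" using not_club_le1 by blast
    ultimately show ?thesis using False by simp
  qed
  have Pr: "pruned r Q"
  proof (rule prunedI[OF TQ], intro ballI)
    fix t assume t: "t \<in> Q"
    have "succ_set r t Q \<noteq> {}" using key[OF t] club_unbounded by blast
    then obtain b where "b \<in> succ_set r t Q" by blast
    thus "\<exists>b. ext t b \<in> Q" using succ_set_eq t QS by blast
  qed
  have Cl: "lt_kappa_closed r Q"
    unfolding lt_kappa_closed_def
  proof (intro allI impI)
    fix s d assume H: "dom s = underS r d \<and> is_limit r d \<and> (\<forall>a. a \<prec> d \<longrightarrow> s |` underS r a \<in> Q)"
    show "s \<in> Q" unfolding Q_def
    proof
      fix p assume p: "p \<in> F"
      have "lt_kappa_closed r p" using FN p NC_MClub MClub_closed by blast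
      moreover have "\<forall>a. a \<prec> d \<longrightarrow> s |` underS r a \<in> p" using H p unfolding Q_def by blast
      ultimately show "s \<in> p" using H unfolding lt_kappa_closed_def by blast
    qed
  qed
  have Br: "club r {a. club_splitting r Q (restr r x a)}" if x: "x \<in> branches r Q" for x
  proof -
    have xp: "x \<in> branches r p" if "p \<in> F" for p
      using x that unfolding branches_def Q_def by blast
    have "{a. club_splitting r Q (restr r x a)} = (\<Inter>p\<in>F. {a. club_splitting r p (restr r x a)})"
      using key branch_in[OF x] unfolding club_splitting_def by blast
    moreover have "club r (\<Inter>p\<in>F. {a. club_splitting r p (restr r x a)})"
    proof (rule club_Inter)
      show "|(\<lambda>p. {a. club_splitting r p (restr r x a)}) ` F| <o r" using small_image Fs by blast
      show "\<forall>C\<in>(\<lambda>p. {a. club_splitting r p (restr r x a)}) ` F. club r C"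
        using xp FN NC_MClub MClub_branch by blast
    qed
    ultimately show ?thesis by simp
  qed
  have "Q \<in> MClub r" using MClubI[OF TQ Pr Cl] Br by blast
  moreover have "normal Q" unfolding normal_def using key by blast
  ultimately show ?thesis unfolding Q_def NC_def by blast
qed

end

context K begin

lemma below_node:
  assumes t: "t \<in> Seqs r" and s: "s \<in> Seqs r" and le: "t \<subseteq>\<^sub>m s" and ne: "t \<noteq> s"
  shows "\<exists>b0. ext t b0 \<subseteq>\<^sub>m s \<and> (\<forall>b. (ext t b \<subseteq>\<^sub>m s \<or> s \<subseteq>\<^sub>m ext t b) \<longrightarrow> b = b0)"
proof -
  have l: "(len t, len s) \<in> r" and e: "t = rs s (len t)" using map_le_iff[OF t s] le by blast+
  have "len t \<noteq> len s" using e rs_len[OF s] ne by metis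
  hence lt: "len t \<prec> len s" using l by (simp add: lt_def)
  have sl: "(sc (len t), len s) \<in> r" using sc_least[OF lt] .
  define u where "u = rs s (sc (len t))"
  have uS: "u \<in> Seqs r" and lu: "len u = sc (len t)" unfolding u_def using rs_Seqs len_rs s sl by blast+
  obtain b0 where b0: "u = ext (rs u (len t)) b0" using sc_node[OF uS lu] by blast
  have "rs u (len t) = t" unfolding u_def using rs_rs[OF lt_imp_le[OF lt_sc]] e by simp
  hence ub: "u = ext t b0" using b0 by simp
  have us: "u \<subseteq>\<^sub>m s" unfolding u_def by (rule rs_le)
  have "b = b0" if H: "ext t b \<subseteq>\<^sub>m s \<or> s \<subseteq>\<^sub>m ext t b" for b
  proof -
    have eS: "ext t b \<in> Seqs r" and le': "len (ext t b) = sc (len t)" using ext_Seqs len_ext t by blast+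
    have "ext t b = u"
    proof (cases "ext t b \<subseteq>\<^sub>m s")
      case True
      thus ?thesis using map_le_rs[OF eS s True] le' unfolding u_def by simp
    next
      case False
      hence se: "s \<subseteq>\<^sub>m ext t b" using H by blast
      have "(len s, sc (len t)) \<in> r" using map_le_len[OF s eS se] le' by simp
      hence "len s = sc (len t)" using sl le_antisym by blast
      hence "s = ext t b" using map_le_eq_len[OF s eS se] le' by simp
      moreover have "u = s" unfolding u_def using \<open>len s = sc (len t)\<close> rs_len[OF s] by simp
      ultimately show ?thesis by simp
    qed
    thus ?thesis using ub ext_inj by metis
  qed
  thus ?thesis using ub us by blast
qed

subsection \<open>Restriction of a condition to a node\<close>

definition cr :: "('a \<Rightarrow> 'a option) set \<Rightarrow> ('a \<Rightarrow> 'a option) \<Rightarrow> ('a \<Rightarrow> 'a option) set" where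
  "cr c s = {u \<in> c. u \<subseteq>\<^sub>m s \<or> s \<subseteq>\<^sub>m u}"

lemma cr_sub: "cr c s \<subseteq> c" unfolding cr_def by blast
lemma cr_in: "s \<in> c \<Longrightarrow> s \<in> cr c s" unfolding cr_def by simp

lemma succ_cr_above:
  assumes sS: "s \<in> Seqs r" and tS: "t \<in> Seqs r" and st: "s \<subseteq>\<^sub>m t"
  shows "succ_set r t (cr c s) = succ_set r t c"
proof -
  have "s \<subseteq>\<^sub>m ext t b" for b using map_le_trans[OF st le_ext[OF tS]] .
  thus ?thesis unfolding succ_set_eq[OF tS] cr_def by auto
qed

lemma succ_cr_below:
  assumes sS: "s \<in> Seqs r" and tS: "t \<in> Seqs r" and ts: "t \<subseteq>\<^sub>m s" and ne: "t \<noteq> s"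
  shows "\<exists>b0. succ_set r t (cr c s) \<subseteq> {b0}"
proof -
  obtain b0 where b0: "\<forall>b. (ext t b \<subseteq>\<^sub>m s \<or> s \<subseteq>\<^sub>m ext t b) \<longrightarrow> b = b0"
    using below_node[OF tS sS ts ne] by blast
  have "succ_set r t (cr c s) \<subseteq> {b0}" unfolding succ_set_eq[OF tS] cr_def using b0 by blast
  thus ?thesis by blast
qed

lemma cr_NC:
  assumes cN: "c \<in> NC" and s: "s \<in> c"
  shows "cr c s \<in> NC"
proof -
  have cM: "c \<in> MClub r" using NC_MClub[OF cN] .
  have T: "is_tree r c" using MClub_tree[OF cM] .
  have sS: "s \<in> Seqs r" using tree_Seqs[OF T s] .
  have crS: "u \<in> Seqs r" if "u \<in> cr c s" for u using that cr_sub tree_Seqs[OF T] by blast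
  have TQ: "is_tree r (cr c s)" unfolding is_tree_def
  proof (intro conjI ballI impI)
    show "cr c s \<noteq> {}" using cr_in[OF s] by blast
    show "cr c s \<subseteq> Seqs r" using crS by blast
    fix u v assume u: "u \<in> cr c s" and v: "v \<in> Seqs r" and vu: "v \<subseteq>\<^sub>m u"
    have uS: "u \<in> Seqs r" using crS[OF u] .
    have vc: "v \<in> c" using tree_le[OF T _ v vu] u cr_sub by blast
    have "v \<subseteq>\<^sub>m s \<or> s \<subseteq>\<^sub>m v"
    proof (cases "u \<subseteq>\<^sub>m s")
      case True thus ?thesis using map_le_trans[OF vu] by blast
    next
      case False
      hence "s \<subseteq>\<^sub>m u" using u unfolding cr_def by blast
      thus ?thesis using Seqs_comparable[OF v sS uS vu] by blast
    qed
    thus "v \<in> cr c s" unfolding cr_def using vc by blast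
  qed
  have succ_info: "(s \<subseteq>\<^sub>m t \<and> succ_set r t (cr c s) = succ_set r t c) \<or>
                   (\<not> s \<subseteq>\<^sub>m t \<and> (\<exists>b. succ_set r t (cr c s) = {b}))" if t: "t \<in> cr c s" for t
  proof (cases "s \<subseteq>\<^sub>m t")
    case True thus ?thesis using succ_cr_above[OF sS crS[OF t] True] by blast
  next
    case False
    have tS: "t \<in> Seqs r" using crS[OF t] .
    have ts: "t \<subseteq>\<^sub>m s" using t False unfolding cr_def by blast
    have ne: "t \<noteq> s" using False by auto
    obtain b0 where b0: "succ_set r t (cr c s) \<subseteq> {b0}" using succ_cr_below[OF sS tS ts ne] by blast
    obtain b1 where b1: "ext t b1 \<subseteq>\<^sub>m s" using below_node[OF tS sS ts ne] by blast
    have "ext t b1 \<in> c" using tree_le[OF T s ext_Seqs[OF tS] b1] .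
    hence "ext t b1 \<in> cr c s" unfolding cr_def using b1 by blast
    hence "b1 \<in> succ_set r t (cr c s)" using succ_set_eq[OF tS] by blast
    hence "succ_set r t (cr c s) = {b1}" using b0 by blast
    thus ?thesis using False by blast
  qed
  have nrm: "normal (cr c s)" unfolding normal_def
  proof
    fix t assume t: "t \<in> cr c s"
    show "club r (succ_set r t (cr c s)) \<or> (\<exists>b. succ_set r t (cr c s) = {b})"
    proof (cases "s \<subseteq>\<^sub>m t")
      case True
      hence "succ_set r t (cr c s) = succ_set r t c" using succ_info[OF t] by blast
      moreover have "t \<in> c" using t cr_sub by blast
      ultimately show ?thesis using normal_split[OF NC_normal[OF cN]] by metis
    next
      case False thus ?thesis using succ_info[OF t] by blast
    qed
  qed
  have Pr: "pruned r (cr c s)"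
  proof (rule prunedI[OF TQ], intro ballI)
    fix t assume t: "t \<in> cr c s"
    have "succ_set r t (cr c s) \<noteq> {}" using nrm t club_unbounded unfolding normal_def by blast
    then obtain b where "b \<in> succ_set r t (cr c s)" by blast
    thus "\<exists>b. ext t b \<in> cr c s" using succ_set_eq crS[OF t] by blast
  qed
  have Cl: "lt_kappa_closed r (cr c s)"
    unfolding lt_kappa_closed_def
  proof (intro allI impI)
    fix s' d assume H: "dom s' = underS r d \<and> is_limit r d \<and> (\<forall>a. a \<prec> d \<longrightarrow> s' |` underS r a \<in> cr c s)"
    have s'S: "s' \<in> Seqs r" using H SeqsI by blast
    have ls': "len s' = d" using H len_eq by blast
    have "s' \<in> c" using MClub_closed[OF cM] H cr_sub unfolding lt_kappa_closed_def by blast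
    moreover have "s' \<subseteq>\<^sub>m s \<or> s \<subseteq>\<^sub>m s'"
    proof (cases "len s \<prec> d")
      case True
      have w: "rs s' (len s) \<in> cr c s" using H True unfolding rs_def by blast
      have wS: "rs s' (len s) \<in> Seqs r" and lw: "len (rs s' (len s)) = len s"
        using rs_Seqs len_rs s'S ls' lt_imp_le[OF True] by blast+
      have "rs s' (len s) = s"
      proof (cases "rs s' (len s) \<subseteq>\<^sub>m s")
        case True thus ?thesis using map_le_eq_len[OF wS sS True] lw by simp
      next
        case False
        hence "s \<subseteq>\<^sub>m rs s' (len s)" using w unfolding cr_def by blast
        thus ?thesis using map_le_eq_len[OF sS wS] lw by simp
      qed
      thus ?thesis using rs_le by metis
    next
      case False
      hence dl: "(d, len s) \<in> r" using not_lt by blast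
      have "s' \<subseteq>\<^sub>m s" unfolding map_le_def
      proof
        fix z assume z: "z \<in> dom s'"
        hence "z \<prec> d" using H unfolding underS_eq by blast
        then obtain a where a: "z \<prec> a" "a \<prec> d" using H unfolding is_limit_def by blast
        have w: "rs s' a \<in> cr c s" using H a(2) unfolding rs_def by blast
        have wS: "rs s' a \<in> Seqs r" and lw: "len (rs s' a) = a"
          using rs_Seqs len_rs s'S ls' lt_imp_le[OF a(2)] by blast+
        have "rs s' a \<subseteq>\<^sub>m s"
        proof (rule ccontr)
          assume "\<not> rs s' a \<subseteq>\<^sub>m s"
          hence "s \<subseteq>\<^sub>m rs s' a" using w unfolding cr_def by blast
          hence "(len s, a) \<in> r" using map_le_len[OF sS wS] lw by simp
          hence "d \<prec> d" using a(2) dl le_lt_trans lt_le_trans by blast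
          thus False by simp
        qed
        moreover have "z \<in> dom (rs s' a)" using z a(1) unfolding rs_def underS_eq by simp
        ultimately have "rs s' a z = s z" unfolding map_le_def by blast
        moreover have "rs s' a z = s' z" using a(1) unfolding rs_def underS_eq by simp
        ultimately show "s' z = s z" by simp
      qed
      thus ?thesis by blast
    qed
    ultimately show "s' \<in> cr c s" unfolding cr_def by blast
  qed
  have Br: "club r {a. club_splitting r (cr c s) (restr r x a)}" if x: "x \<in> branches r (cr c s)" for x
  proof -
    have xc: "x \<in> branches r c" using branches_mono[OF cr_sub] x by blast
    have rxs: "restr r x (len s) = s"
    proof -
      have w: "restr r x (len s) \<in> cr c s" using branch_in[OF x] .
      have lw: "len (restr r x (len s)) = len s" using len_restr .
      show ?thesis
      proof (cases "restr r x (len s) \<subseteq>\<^sub>m s")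
        case True thus ?thesis using map_le_eq_len[OF restr_Seqs sS True] lw by simp
      next
        case False
        hence "s \<subseteq>\<^sub>m restr r x (len s)" using w unfolding cr_def by blast
        hence "s = restr r x (len s)" using map_le_eq_len[OF sS restr_Seqs] lw by simp
        thus ?thesis by simp
      qed
    qed
    have "{a. club_splitting r (cr c s) (restr r x a)} =
          {a. club_splitting r c (restr r x a)} \<inter> {a. (len s, a) \<in> r}"
    proof (intro set_eqI iffI)
      fix a assume a: "a \<in> {a. club_splitting r (cr c s) (restr r x a)}"
      have w: "restr r x a \<in> cr c s" using branch_in[OF x] .
      have "s \<subseteq>\<^sub>m restr r x a"
      proof (rule ccontr)
        assume "\<not> s \<subseteq>\<^sub>m restr r x a"
        then obtain b where "succ_set r (restr r x a) (cr c s) = {b}" using succ_info[OF w] by blast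
        thus False using a not_club_le1 unfolding club_splitting_def by blast
      qed
      hence "(len s, a) \<in> r" using map_le_len[OF sS restr_Seqs] len_restr by metis
      moreover have "club_splitting r c (restr r x a)"
        using a succ_cr_above[OF sS restr_Seqs \<open>s \<subseteq>\<^sub>m restr r x a\<close>] unfolding club_splitting_def by simp
      ultimately show "a \<in> {a. club_splitting r c (restr r x a)} \<inter> {a. (len s, a) \<in> r}" by blast
    next
      fix a assume a: "a \<in> {a. club_splitting r c (restr r x a)} \<inter> {a. (len s, a) \<in> r}"
      have "s \<subseteq>\<^sub>m restr r x a" using restr_mono[of "len s" a x] a rxs by simp
      thus "a \<in> {a. club_splitting r (cr c s) (restr r x a)}"
        using a succ_cr_above[OF sS restr_Seqs] unfolding club_splitting_def by simp
    qed
    moreover have "club r ({a. club_splitting r c (restr r x a)} \<inter> {a. (len s, a) \<in> r})"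
      using club_Int MClub_branch[OF cM xc] club_tail by blast
    ultimately show ?thesis by simp
  qed
  have "cr c s \<in> MClub r" using MClubI[OF TQ Pr Cl] Br by blast
  thus ?thesis using nrm unfolding NC_def by blast
qed

end

context K begin

lemma node_step:
  assumes t: "t \<in> Seqs r" and a: "a \<prec> len t"
  shows "rs t (sc a) = ext (rs t a) (the (t a)) \<and> t a \<noteq> None"
proof -
  have sl: "(sc a, len t) \<in> r" using sc_least[OF a] .
  define u where "u = rs t (sc a)"
  have uS: "u \<in> Seqs r" and lu: "len u = sc a" unfolding u_def using rs_Seqs len_rs t sl by blast+
  obtain b where b: "u = ext (rs u a) b" using sc_node[OF uS lu] by blast
  have ru: "rs u a = rs t a" unfolding u_def using rs_rs[OF lt_imp_le[OF lt_sc]] by simp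
  have lra: "len (rs t a) = a" using len_rs t lt_imp_le[OF a] by blast
  have "u a = Some b" using b ru lra ext_at by metis
  moreover have "u a = t a" unfolding u_def rs_def using lt_sc by (simp add: underS_eq)
  ultimately have "t a = Some b" by simp
  thus ?thesis using b ru unfolding u_def by simp
qed

lemma ext_val: "t \<in> Seqs r \<Longrightarrow> a \<prec> len t \<Longrightarrow> ext t b a = t a"
  unfolding ext_def by auto

lemma rs_ext_below: "t \<in> Seqs r \<Longrightarrow> (a, len t) \<in> r \<Longrightarrow> rs (ext t b) a = rs t a"
  using rs_rs[of a "len t" "ext t b"] rs_ext by simp

lemma normalize:
  assumes cM: "c \<in> MClub r" and s: "s \<in> c"
  shows "\<exists>c'\<in>NC. c' \<subseteq> c \<and> s \<in> c'"
proof -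
  have T: "is_tree r c" using MClub_tree[OF cM] .
  have sS: "s \<in> Seqs r" using tree_Seqs[OF T s] .
  have cS: "u \<in> Seqs r" if "u \<in> c" for u using tree_Seqs[OF T that] .
  define h where "h u = (if u \<subseteq>\<^sub>m s \<and> u \<noteq> s then the (s (len u)) else (SOME b. ext u b \<in> c))" for u
  have hc: "ext u (h u) \<in> c" if u: "u \<in> c" for u
  proof (cases "u \<subseteq>\<^sub>m s \<and> u \<noteq> s")
    case True
    have uS: "u \<in> Seqs r" using cS[OF u] .
    have l: "(len u, len s) \<in> r" and e: "u = rs s (len u)" using map_le_iff[OF uS sS] True by blast+
    have "len u \<noteq> len s" using e rs_len[OF sS] True by metis
    hence lt: "len u \<prec> len s" using l by (simp add: lt_def)
    have "rs s (sc (len u)) = ext u (the (s (len u)))" using node_step[OF sS lt] e by simp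
    moreover have "rs s (sc (len u)) \<in> c" using tree_rs[OF T s sc_least[OF lt]] .
    moreover have "h u = the (s (len u))" unfolding h_def by (rule if_P[OF True])
    ultimately show ?thesis by simp
  next
    case False
    have "\<exists>b. ext u b \<in> c" using succ_ne[OF T MClub_pruned[OF cM] u] .
    hence "ext u (SOME b. ext u b \<in> c) \<in> c" by (rule someI_ex)
    moreover have "h u = (SOME b. ext u b \<in> c)" unfolding h_def by (rule if_not_P[OF False])
    ultimately show ?thesis by simp
  qed
  define c' where "c' = {t \<in> c. \<forall>a. a \<prec> len t \<longrightarrow> \<not> club_splitting r c (rs t a) \<longrightarrow> t a = Some (h (rs t a))}"
  have c'c: "c' \<subseteq> c" unfolding c'_def by blast
  have c'S: "t \<in> Seqs r" if "t \<in> c'" for t using that c'c cS by blast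
  have ext_iff: "ext u b \<in> c' \<longleftrightarrow> ext u b \<in> c \<and> (\<not> club_splitting r c u \<longrightarrow> b = h u)" if u: "u \<in> c'" for u b
  proof -
    have uS: "u \<in> Seqs r" using c'S[OF u] .
    have le: "len (ext u b) = sc (len u)" using len_ext[OF uS] .
    have pos: "(\<forall>a. a \<prec> len (ext u b) \<longrightarrow> \<not> club_splitting r c (rs (ext u b) a) \<longrightarrow> ext u b a = Some (h (rs (ext u b) a)))
       \<longleftrightarrow> (\<not> club_splitting r c u \<longrightarrow> b = h u)"
    proof
      assume H: "\<forall>a. a \<prec> len (ext u b) \<longrightarrow> \<not> club_splitting r c (rs (ext u b) a) \<longrightarrow> ext u b a = Some (h (rs (ext u b) a))"
      have "len u \<prec> len (ext u b)" using le lt_sc by simp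
      moreover have "rs (ext u b) (len u) = u" using rs_ext[OF uS] .
      ultimately show "\<not> club_splitting r c u \<longrightarrow> b = h u" using H ext_at[of u b] by auto
    next
      assume H: "\<not> club_splitting r c u \<longrightarrow> b = h u"
      show "\<forall>a. a \<prec> len (ext u b) \<longrightarrow> \<not> club_splitting r c (rs (ext u b) a) \<longrightarrow> ext u b a = Some (h (rs (ext u b) a))"
      proof (intro allI impI)
        fix a assume a: "a \<prec> len (ext u b)" and ns: "\<not> club_splitting r c (rs (ext u b) a)"
        have "(a, len u) \<in> r" using a le lt_sc_iff by simp
        hence "a = len u \<or> a \<prec> len u" unfolding lt_def by blast
        thus "ext u b a = Some (h (rs (ext u b) a))"
        proof
          assume "a = len u"
          thus ?thesis using H ns rs_ext[OF uS] ext_at[of u b] by simp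
        next
          assume al: "a \<prec> len u"
          have "rs (ext u b) a = rs u a" using rs_ext_below[OF uS lt_imp_le[OF al]] .
          moreover have "ext u b a = u a" using ext_val[OF uS al] .
          moreover have "u a = Some (h (rs u a))" using u al ns calculation(1) unfolding c'_def by auto
          ultimately show ?thesis by simp
        qed
      qed
    qed
    show ?thesis using pos unfolding c'_def by blast
  qed
  have succ': "succ_set r u c' = (if club_splitting r c u then succ_set r u c else {h u})" if u: "u \<in> c'" for u
  proof -
    have uS: "u \<in> Seqs r" using c'S[OF u] .
    have "ext u (h u) \<in> c" using hc u c'c by blast
    thus ?thesis unfolding succ_set_eq[OF uS] using ext_iff[OF u] by auto
  qed
  have TQ: "is_tree r c'" unfolding is_tree_def
  proof (intro conjI ballI impI)
    show "c' \<noteq> {}"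
    proof -
      have "Map.empty \<in> c" using tree_root[OF T] .
      hence "Map.empty \<in> c'" unfolding c'_def using len_root underS_z0 unfolding underS_eq by auto
      thus ?thesis by blast
    qed
    show "c' \<subseteq> Seqs r" using c'S by blast
    fix t v assume t: "t \<in> c'" and v: "v \<in> Seqs r" and vt: "v \<subseteq>\<^sub>m t"
    have tS: "t \<in> Seqs r" using c'S[OF t] .
    have vc: "v \<in> c" using tree_le[OF T _ v vt] t c'c by blast
    have l: "(len v, len t) \<in> r" and e: "v = rs t (len v)" using map_le_iff[OF v tS] vt by blast+
    have "\<forall>a. a \<prec> len v \<longrightarrow> \<not> club_splitting r c (rs v a) \<longrightarrow> v a = Some (h (rs v a))"
    proof (intro allI impI)
      fix a assume a: "a \<prec> len v" and ns: "\<not> club_splitting r c (rs v a)"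
      have rv: "rs v a = rs t a" using e rs_rs[OF lt_imp_le[OF a]] by metis
      have va: "v a = t a" using e a unfolding rs_def underS_eq by (metis restrict_in mem_Collect_eq)
      have "a \<prec> len t" using a l lt_le_trans by blast
      thus "v a = Some (h (rs v a))" using t ns rv va unfolding c'_def by auto
    qed
    thus "v \<in> c'" unfolding c'_def using vc by blast
  qed
  have nrm: "normal c'" unfolding normal_def
  proof
    fix u assume u: "u \<in> c'"
    show "club r (succ_set r u c') \<or> (\<exists>b. succ_set r u c' = {b})"
      using succ'[OF u] unfolding club_splitting_def by (cases "club r (succ_set r u c)") auto
  qed
  have Pr: "pruned r c'"
  proof (rule prunedI[OF TQ], intro ballI)
    fix t assume t: "t \<in> c'"
    have "succ_set r t c' \<noteq> {}" using nrm t club_unbounded unfolding normal_def by blast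
    then obtain b where "b \<in> succ_set r t c'" by blast
    thus "\<exists>b. ext t b \<in> c'" using succ_set_eq c'S[OF t] by blast
  qed
  have Cl: "lt_kappa_closed r c'"
    unfolding lt_kappa_closed_def
  proof (intro allI impI)
    fix s' d assume H: "dom s' = underS r d \<and> is_limit r d \<and> (\<forall>a. a \<prec> d \<longrightarrow> s' |` underS r a \<in> c')"
    have s'S: "s' \<in> Seqs r" using H SeqsI by blast
    have ls': "len s' = d" using H len_eq by blast
    have "s' \<in> c" using MClub_closed[OF cM] H c'c unfolding lt_kappa_closed_def by blast
    moreover have "\<forall>a. a \<prec> len s' \<longrightarrow> \<not> club_splitting r c (rs s' a) \<longrightarrow> s' a = Some (h (rs s' a))"
    proof (intro allI impI)
      fix a assume a: "a \<prec> len s'" and ns: "\<not> club_splitting r c (rs s' a)"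
      obtain b where b: "a \<prec> b" "b \<prec> d" using H a ls' unfolding is_limit_def by blast
      have w: "rs s' b \<in> c'" using H b(2) unfolding rs_def by blast
      have lw: "len (rs s' b) = b" using len_rs s'S ls' lt_imp_le[OF b(2)] by blast
      have "rs (rs s' b) a = rs s' a" using rs_rs[OF lt_imp_le[OF b(1)]] .
      moreover have "rs s' b a = s' a" using b(1) unfolding rs_def underS_eq by simp
      ultimately show "s' a = Some (h (rs s' a))" using w ns b(1) lw unfolding c'_def by auto
    qed
    ultimately show "s' \<in> c'" unfolding c'_def by blast
  qed
  have Br: "club r {a. club_splitting r c' (restr r x a)}" if x: "x \<in> branches r c'" for x
  proof -
    have xc: "x \<in> branches r c" using branches_mono[OF c'c] x by blast
    have "club_splitting r c' (restr r x a) \<longleftrightarrow> club_splitting r c (restr r x a)" for a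
      using succ'[OF branch_in[OF x]] not_club_le1 unfolding club_splitting_def by auto
    hence "{a. club_splitting r c' (restr r x a)} = {a. club_splitting r c (restr r x a)}" by blast
    thus ?thesis using MClub_branch[OF cM xc] by simp
  qed
  have "c' \<in> MClub r" using MClubI[OF TQ Pr Cl] Br by blast
  hence "c' \<in> NC" using nrm unfolding NC_def by blast
  moreover have "s \<in> c'"
  proof -
    have "\<forall>a. a \<prec> len s \<longrightarrow> \<not> club_splitting r c (rs s a) \<longrightarrow> s a = Some (h (rs s a))"
    proof (intro allI impI)
      fix a assume a: "a \<prec> len s"
      have rsS: "rs s a \<in> Seqs r" and lr: "len (rs s a) = a" using rs_Seqs len_rs sS lt_imp_le[OF a] by blast+
      have "rs s a \<noteq> s" using lr a by auto
      hence "h (rs s a) = the (s a)" unfolding h_def using rs_le lr by simp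
      moreover have "s a \<noteq> None" using node_step[OF sS a] by blast
      ultimately show "s a = Some (h (rs s a))" by auto
    qed
    thus ?thesis unfolding c'_def using s by blast
  qed
  ultimately show ?thesis using c'c by blast
qed

lemma D_ex:
  assumes cN: "c \<in> NC" and s: "s \<in> c" and X: "X \<in> nowhere_dense r (MClub r)"
  shows "\<exists>q\<in>NC. q \<subseteq> c \<and> s \<in> q \<and> branches r q \<inter> X = {}"
proof -
  have crN: "cr c s \<in> NC" using cr_NC[OF cN s] .
  obtain q' where q': "q' \<in> MClub r" "q' \<subseteq> cr c s" "branches r q' \<inter> X = {}"
    using X NC_MClub[OF crN] unfolding nowhere_dense_def by blast
  have T: "is_tree r c" using MClub_tree[OF NC_MClub[OF cN]] .
  have sS: "s \<in> Seqs r" using tree_Seqs[OF T s] .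
  have Tq: "is_tree r q'" using MClub_tree[OF q'(1)] .
  have "s \<in> q'"
  proof -
    have "Map.empty \<in> q'" using tree_root[OF Tq] .
    then obtain u where u: "u \<in> q'" "club_splitting r q' u" using q'(1) unfolding MClub_def by blast
    have uS: "u \<in> Seqs r" using tree_Seqs[OF Tq u(1)] .
    have ucr: "u \<in> cr c s" using u q' by blast
    show ?thesis
    proof (cases "s \<subseteq>\<^sub>m u")
      case True thus ?thesis using tree_le[OF Tq u(1) sS] by blast
    next
      case False
      hence us: "u \<subseteq>\<^sub>m s" "u \<noteq> s" using ucr unfolding cr_def by auto
      obtain b0 where "succ_set r u (cr c s) \<subseteq> {b0}" using succ_cr_below[OF sS uS us] by blast
      moreover have "succ_set r u q' \<subseteq> succ_set r u (cr c s)" using succ_sub[OF uS q'(2)] .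
      ultimately show ?thesis using u(2) not_club_le1 unfolding club_splitting_def by blast
    qed
  qed
  then obtain q where q: "q \<in> NC" "q \<subseteq> q'" "s \<in> q" using normalize[OF q'(1)] by blast
  have "branches r q \<inter> X = {}" using branches_mono[OF q(2)] q'(3) by blast
  moreover have "q \<subseteq> c" using q(2) q'(2) cr_sub by blast
  ultimately show ?thesis using q by blast
qed

end

context K begin

lemma sc_inj: "sc a = sc b \<Longrightarrow> a = b"
proof (rule ccontr)
  assume e: "sc a = sc b" and ne: "a \<noteq> b"
  { fix a b assume e: "sc a = sc b" and ab: "a \<prec> b"
    have "(sc a, b) \<in> r" using sc_least[OF ab] .
    hence "sc a \<prec> sc b" using le_lt_trans lt_sc by blast
    hence False using e by simp }
  note X = this
  have "a \<prec> b \<or> b \<prec> a" using lt_total[of a b] ne by blast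
  thus False using X[of a b] X[of b a] e by auto
qed

lemma sc_ne_z0: "sc a \<noteq> z0"
proof
  assume "sc a = z0"
  hence "a \<prec> z0" using lt_sc[of a] by simp
  hence "a \<in> underS r z0" unfolding underS_eq by simp
  thus False using underS_z0 by simp
qed

lemma limit_ne_z0: "is_limit r d \<Longrightarrow> d \<noteq> z0"
  using underS_z0 unfolding is_limit_def underS_eq by auto

lemma len_z0_root: "t \<in> Seqs r \<Longrightarrow> len t = z0 \<Longrightarrow> t = Map.empty"
  using Seqs_dom underS_z0 by fastforce

end

locale Kc = K r for r :: "'a rel" +
  fixes p :: "('a \<Rightarrow> 'a option) set" and F :: "'a \<Rightarrow> ('a \<Rightarrow> 'a) set"
  assumes pM: "p \<in> MClub r" and FN: "\<And>i. F i \<in> nowhere_dense r (MClub r)"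
begin

definition p0 where "p0 = (SOME c. c \<in> NC \<and> c \<subseteq> p \<and> Map.empty \<in> c)"

lemma p0: "p0 \<in> NC \<and> p0 \<subseteq> p \<and> Map.empty \<in> p0"
proof -
  have "\<exists>c. c \<in> NC \<and> c \<subseteq> p \<and> Map.empty \<in> c"
    using normalize[OF pM tree_root[OF MClub_tree[OF pM]]] by blast
  thus ?thesis unfolding p0_def by (rule someI_ex)
qed

definition Dsel where
  "Dsel c s j = (SOME q. q \<in> NC \<and> q \<subseteq> c \<and> s \<in> q \<and> branches r q \<inter> F j = {})"

lemma Dsel: "c \<in> NC \<Longrightarrow> s \<in> c \<Longrightarrow>
  Dsel c s j \<in> NC \<and> Dsel c s j \<subseteq> c \<and> s \<in> Dsel c s j \<and> branches r (Dsel c s j) \<inter> F j = {}"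
proof -
  assume c: "c \<in> NC" and s: "s \<in> c"
  have "\<exists>q. q \<in> NC \<and> q \<subseteq> c \<and> s \<in> q \<and> branches r q \<inter> F j = {}"
    using D_ex[OF c s FN] by blast
  thus ?thesis unfolding Dsel_def by (rule someI_ex)
qed

definition mn :: "'a set \<Rightarrow> 'a" where
  "mn H = (SOME m. m \<notin> H \<and> (\<forall>b. b \<notin> H \<longrightarrow> (m,b) \<in> r))"

lemma mn: "a \<notin> H \<Longrightarrow> mn H \<notin> H \<and> (\<forall>b. b \<notin> H \<longrightarrow> (mn H, b) \<in> r)"
proof -
  assume "a \<notin> H"
  hence "\<exists>m. m \<notin> H \<and> (\<forall>b. b \<notin> H \<longrightarrow> (m,b) \<in> r)" using least_ex[where P="\<lambda>b. b \<notin> H"] by blast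
  thus ?thesis unfolding mn_def by (rule someI_ex)
qed

definition pred :: "('a \<Rightarrow> 'a option) \<Rightarrow> 'a" where
  "pred t = (THE g. len t = sc g)"

lemma pred_eq: "len t = sc g \<Longrightarrow> pred t = g"
  unfolding pred_def using sc_inj by (intro the_equality) auto

definition stepS where
  "stepS c H u t = (if t \<in> c then (if club_splitting r c u then Some (Dsel c t (mn H), insert (mn H) H)
                    else Some (c, H)) else None)"

definition G :: "(('a \<Rightarrow> 'a option) \<Rightarrow> (('a \<Rightarrow> 'a option) set \<times> 'a set) option)
   \<Rightarrow> ('a \<Rightarrow> 'a option) \<Rightarrow> (('a \<Rightarrow> 'a option) set \<times> 'a set) option" where
  "G f t = (if t \<notin> Seqs r then None
     else if len t = z0 then Some (p0, {})
     else if (\<exists>g. len t = sc g) then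
       (case f (rs t (pred t)) of None \<Rightarrow> None | Some cH \<Rightarrow> stepS (fst cH) (snd cH) (rs t (pred t)) t)
     else if (\<forall>a\<in>underS r (len t). f (rs t a) \<noteq> None) then
       Some (\<Inter>((\<lambda>a. fst (the (f (rs t a)))) ` underS r (len t)),
             \<Union>((\<lambda>a. snd (the (f (rs t a)))) ` underS r (len t)))
     else None)"

definition Rn where "Rn = inv_image {(a,b). a \<prec> b} len"

lemma wf_Rn: "wf Rn" unfolding Rn_def using wf_lt by (rule wf_inv_image)

lemma adm: "adm_wf Rn G"
  unfolding adm_wf_def
proof (intro allI impI)
  fix f g :: "('a \<Rightarrow> 'a option) \<Rightarrow> (('a \<Rightarrow> 'a option) set \<times> 'a set) option" and t
  assume H: "\<forall>z. (z, t) \<in> Rn \<longrightarrow> f z = g z"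
  show "G f t = G g t"
  proof (cases "t \<in> Seqs r")
    case False thus ?thesis unfolding G_def by simp
  next
    case True
    have eq: "f (rs t a) = g (rs t a)" if "a \<prec> len t" for a
    proof -
      have "len (rs t a) = a" using len_rs True lt_imp_le[OF that] by blast
      hence "(rs t a, t) \<in> Rn" unfolding Rn_def using that by simp
      thus ?thesis using H by blast
    qed
    have e1: "(\<lambda>a. fst (the (f (rs t a)))) ` underS r (len t) = (\<lambda>a. fst (the (g (rs t a)))) ` underS r (len t)"
      by (rule image_cong) (simp_all add: eq underS_eq)
    have e2: "(\<lambda>a. snd (the (f (rs t a)))) ` underS r (len t) = (\<lambda>a. snd (the (g (rs t a)))) ` underS r (len t)"
      by (rule image_cong) (simp_all add: eq underS_eq)
    have e3: "(\<forall>a\<in>underS r (len t). f (rs t a) \<noteq> None) = (\<forall>a\<in>underS r (len t). g (rs t a) \<noteq> None)"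
      using eq unfolding underS_eq by auto
    have e4: "(\<exists>h. len t = sc h) \<Longrightarrow> f (rs t (pred t)) = g (rs t (pred t))"
    proof -
      assume "\<exists>h. len t = sc h"
      then obtain h where "len t = sc h" by blast
      hence "pred t \<prec> len t" using pred_eq lt_sc by simp
      thus ?thesis using eq by blast
    qed
    show ?thesis
    proof (cases "\<exists>h. len t = sc h")
      case True
      thus ?thesis unfolding G_def using e4[OF True] by simp
    next
      case False
      thus ?thesis unfolding G_def e1 e2 e3 by simp
    qed
  qed
qed

definition st where "st = wfrec Rn G"

lemma st_eq: "st t = G st t"
  using fun_cong[OF wfrec_fixpoint[OF wf_Rn adm], of t] unfolding st_def .

lemma st_root: "st Map.empty = Some (p0, {})"
  using st_eq[of Map.empty] root_Seqs len_root unfolding G_def by simp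

lemma st_sc:
  assumes t: "t \<in> Seqs r" and l: "len t = sc g"
  shows "st t = (case st (rs t g) of None \<Rightarrow> None | Some cH \<Rightarrow> stepS (fst cH) (snd cH) (rs t g) t)"
proof -
  have "pred t = g" using pred_eq[OF l] .
  moreover have "len t \<noteq> z0" using l sc_ne_z0 by simp
  ultimately show ?thesis using st_eq[of t] t l unfolding G_def by auto
qed

lemma st_lim:
  assumes t: "t \<in> Seqs r" and l: "is_limit r (len t)"
  shows "st t = (if (\<forall>a\<in>underS r (len t). st (rs t a) \<noteq> None) then
       Some (\<Inter>((\<lambda>a. fst (the (st (rs t a)))) ` underS r (len t)),
             \<Union>((\<lambda>a. snd (the (st (rs t a)))) ` underS r (len t)))
     else None)"
proof -
  have "len t \<noteq> z0" using limit_ne_z0[OF l] .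
  moreover have "\<not> (\<exists>g. len t = sc g)" using limit_not_sc[OF l] by blast
  ultimately show ?thesis using st_eq[of t] t unfolding G_def by simp
qed

lemma st_nonSeq: "t \<notin> Seqs r \<Longrightarrow> st t = None"
  using st_eq[of t] unfolding G_def by simp

end

context Kc begin

definition Inv where
  "Inv t c H \<longleftrightarrow> c \<in> NC \<and> t \<in> c \<and> c \<subseteq> p0 \<and> H \<subseteq> underS r (len t) \<and>
     (\<forall>i\<in>H. \<forall>j. j \<prec> i \<longrightarrow> j \<in> H) \<and>
     (\<forall>a. (a, len t) \<in> r \<longrightarrow> (\<exists>c' H'. st (rs t a) = Some (c', H') \<and> c \<subseteq> c' \<and> H' \<subseteq> H))"

lemma z0_le_eq: "(a, z0) \<in> r \<Longrightarrow> a = z0"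
  using z0_least le_antisym by blast

lemma inv_root: "Inv Map.empty p0 {}"
  unfolding Inv_def
proof (intro conjI allI impI ballI)
  show "p0 \<in> NC" "Map.empty \<in> p0" "p0 \<subseteq> p0" using p0 by auto
  show "{} \<subseteq> underS r (len Map.empty)" by simp
  fix a assume "(a, len Map.empty) \<in> r"
  hence "a = z0" using z0_le_eq len_root by simp
  hence "rs Map.empty a = Map.empty" using rs_len[OF root_Seqs] len_root by simp
  thus "\<exists>c' H'. st (rs Map.empty a) = Some (c', H') \<and> p0 \<subseteq> c' \<and> H' \<subseteq> {}"
    using st_root by simp
qed simp

lemma inv_step:
  assumes t: "t \<in> Seqs r" and l: "len t = sc g" and IH: "\<And>c H. st (rs t g) = Some (c,H) \<Longrightarrow> Inv (rs t g) c H"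
    and S: "st t = Some (c,H)"
  shows "Inv t c H"
proof -
  define u where "u = rs t g"
  have gl: "(g, len t) \<in> r" using l lt_sc lt_imp_le by simp
  have uS: "u \<in> Seqs r" and lu: "len u = g" unfolding u_def using rs_Seqs len_rs t gl by blast+
  obtain c0 H0 where s0: "st u = Some (c0,H0)" and s1: "stepS c0 H0 u t = Some (c,H)"
    using S st_sc[OF t l] unfolding u_def by (auto split: option.splits)
  have I0: "Inv u c0 H0" using IH s0 unfolding u_def by blast
  have tc0: "t \<in> c0" using s1 unfolding stepS_def by (auto split: if_splits)
  have c0N: "c0 \<in> NC" using I0 unfolding Inv_def by blast
  have H0u: "H0 \<subseteq> underS r g" using I0 lu unfolding Inv_def by blast
  have gH0: "g \<notin> H0" using H0u unfolding underS_eq by auto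
  have mnH: "mn H0 \<notin> H0" "\<forall>b. b \<notin> H0 \<longrightarrow> (mn H0, b) \<in> r" using mn[OF gH0] by blast+
  have ch: "(c = Dsel c0 t (mn H0) \<and> H = insert (mn H0) H0) \<or> (c = c0 \<and> H = H0)"
    using s1 unfolding stepS_def by (auto split: if_splits)
  have cc0: "c \<subseteq> c0" and HH0: "H0 \<subseteq> H" and cN: "c \<in> NC" and tc: "t \<in> c"
    using ch Dsel[OF c0N tc0] c0N tc0 by auto
  have "c \<subseteq> p0" using cc0 I0 unfolding Inv_def by blast
  moreover have "H \<subseteq> underS r (len t)"
  proof -
    have "(mn H0, g) \<in> r" using mnH gH0 by blast
    hence "mn H0 \<prec> sc g" using lt_sc_iff by simp
    moreover have "underS r g \<subseteq> underS r (sc g)" using underS_sc by auto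
    ultimately show ?thesis using ch H0u l unfolding underS_eq by auto
  qed
  moreover have "\<forall>i\<in>H. \<forall>j. j \<prec> i \<longrightarrow> j \<in> H"
  proof (intro ballI allI impI)
    fix i j assume i: "i \<in> H" and j: "j \<prec> i"
    have init0: "\<forall>i\<in>H0. \<forall>j. j \<prec> i \<longrightarrow> j \<in> H0" using I0 unfolding Inv_def by blast
    show "j \<in> H"
    proof (cases "i \<in> H0")
      case True thus ?thesis using init0 j HH0 by blast
    next
      case False
      hence "i = mn H0" using ch i by auto
      hence "j \<in> H0" using mnH(2) j not_lt by blast
      thus ?thesis using HH0 by blast
    qed
  qed
  moreover have "\<forall>a. (a, len t) \<in> r \<longrightarrow> (\<exists>c' H'. st (rs t a) = Some (c', H') \<and> c \<subseteq> c' \<and> H' \<subseteq> H)"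
  proof (intro allI impI)
    fix a assume a: "(a, len t) \<in> r"
    show "\<exists>c' H'. st (rs t a) = Some (c', H') \<and> c \<subseteq> c' \<and> H' \<subseteq> H"
    proof (cases "a = len t")
      case True thus ?thesis using rs_len[OF t] S by auto
    next
      case False
      hence "a \<prec> sc g" using a l by (simp add: lt_def)
      hence ag: "(a, g) \<in> r" using lt_sc_iff by simp
      have e: "rs t a = rs u a" unfolding u_def using rs_rs[OF ag] by simp
      obtain c' H' where o: "st (rs u a) = Some (c', H')" "c0 \<subseteq> c'" "H' \<subseteq> H0"
        using I0 ag lu unfolding Inv_def by blast
      have "st (rs t a) = Some (c', H')" using e o(1) by simp
      moreover have "c \<subseteq> c'" using cc0 o(2) by blast
      moreover have "H' \<subseteq> H" using HH0 o(3) by blast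
      ultimately show ?thesis by blast
    qed
  qed
  ultimately show ?thesis unfolding Inv_def using cN tc by blast
qed

lemma inv_lim:
  assumes t: "t \<in> Seqs r" and l: "is_limit r (len t)"
    and IH: "\<And>a c H. a \<prec> len t \<Longrightarrow> st (rs t a) = Some (c,H) \<Longrightarrow> Inv (rs t a) c H"
    and S: "st t = Some (c,H)"
  shows "Inv t c H"
proof -
  define d where "d = len t"
  have all: "\<forall>a\<in>underS r d. st (rs t a) \<noteq> None" and
    cH: "c = \<Inter>((\<lambda>a. fst (the (st (rs t a)))) ` underS r d)"
        "H = \<Union>((\<lambda>a. snd (the (st (rs t a)))) ` underS r d)"
    using S st_lim[OF t l] unfolding d_def by (auto split: if_splits)
  define ca where "ca a = fst (the (st (rs t a)))" for a
  define ha where "ha a = snd (the (st (rs t a)))" for a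
  have sa: "st (rs t a) = Some (ca a, ha a)" if "a \<prec> d" for a
    using all that unfolding ca_def ha_def underS_eq by auto
  have Ia: "Inv (rs t a) (ca a) (ha a)" if "a \<prec> d" for a using IH sa that unfolding d_def by blast
  have lra: "len (rs t a) = a" if "a \<prec> d" for a using len_rs t lt_imp_le that unfolding d_def by blast
  have mono: "ca b \<subseteq> ca a \<and> ha a \<subseteq> ha b" if ab: "(a,b) \<in> r" and bd: "b \<prec> d" for a b
  proof -
    have X: "\<forall>a'. (a', len (rs t b)) \<in> r \<longrightarrow> (\<exists>c' H'. st (rs (rs t b) a') = Some (c', H') \<and> ca b \<subseteq> c' \<and> H' \<subseteq> ha b)"
      using Ia[OF bd] unfolding Inv_def by blast
    have "(a, len (rs t b)) \<in> r" using ab lra[OF bd] by simp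
    then obtain c' H' where "st (rs (rs t b) a) = Some (c', H')" "ca b \<subseteq> c'" "H' \<subseteq> ha b"
      using X by blast
    moreover have "rs (rs t b) a = rs t a" using rs_rs[OF ab] .
    moreover have "a \<prec> d" using ab bd le_lt_trans by blast
    ultimately show ?thesis using sa by auto
  qed
  have caN: "ca a \<in> NC" if "a \<prec> d" for a using Ia[OF that] unfolding Inv_def by blast
  have cc: "c = \<Inter>(ca ` underS r d)" "H = \<Union>(ha ` underS r d)" using cH unfolding ca_def ha_def by auto
  have dne: "underS r d \<noteq> {}" using l unfolding d_def is_limit_def underS_eq by auto
  have cN: "c \<in> NC" unfolding cc
  proof (rule chain_Inter)
    show "ca ` underS r d \<noteq> {}" using dne by blast
    show "ca ` underS r d \<subseteq> NC" using caN unfolding underS_eq by blast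
    show "|ca ` underS r d| <o r" using small_image underS_card by blast
    show "\<forall>x\<in>ca ` underS r d. \<forall>y\<in>ca ` underS r d. x \<subseteq> y \<or> y \<subseteq> x"
    proof (intro ballI)
      fix x y assume "x \<in> ca ` underS r d" "y \<in> ca ` underS r d"
      then obtain a b where ab: "a \<prec> d" "b \<prec> d" "x = ca a" "y = ca b" unfolding underS_eq by blast
      show "x \<subseteq> y \<or> y \<subseteq> x"
      proof (cases "(a,b) \<in> r")
        case True thus ?thesis using mono[OF True ab(2)] ab by blast
      next
        case False
        hence "(b,a) \<in> r" using le_total by blast
        thus ?thesis using mono[OF _ ab(1)] ab by blast
      qed
    qed
  qed
  have tc: "t \<in> c"
  proof -
    have "t \<in> ca a" if a: "a \<prec> d" for a
    proof -
      have cl: "lt_kappa_closed r (ca a)" using caN[OF a] NC_MClub MClub_closed by blast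
      have T: "is_tree r (ca a)" using caN[OF a] NC_MClub MClub_tree by blast
      have "\<forall>b. b \<prec> d \<longrightarrow> t |` underS r b \<in> ca a"
      proof (intro allI impI)
        fix b assume b: "b \<prec> d"
        show "t |` underS r b \<in> ca a"
        proof (cases "(a,b) \<in> r")
          case True
          have "rs t b \<in> ca b" using Ia[OF b] unfolding Inv_def by blast
          thus ?thesis using mono[OF True b] unfolding rs_def by blast
        next
          case False
          hence ba: "(b,a) \<in> r" using le_total by blast
          have "rs t a \<in> ca a" using Ia[OF a] unfolding Inv_def by blast
          moreover have "rs t b \<subseteq>\<^sub>m rs t a" using rs_mono[OF t ba] a lt_imp_le unfolding d_def by blast
          moreover have "rs t b \<in> Seqs r" using rs_Seqs t b lt_imp_le unfolding d_def by blast
          ultimately show ?thesis using tree_le[OF T] unfolding rs_def by blast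
        qed
      qed
      moreover have "dom t = underS r d" using Seqs_dom[OF t] unfolding d_def .
      ultimately show ?thesis using cl l unfolding lt_kappa_closed_def d_def by blast
    qed
    thus ?thesis unfolding cc underS_eq by blast
  qed
  have "c \<subseteq> p0"
  proof -
    obtain a where a: "a \<prec> d" using dne unfolding underS_eq by blast
    have "c \<subseteq> ca a" unfolding cc using a unfolding underS_eq by blast
    thus ?thesis using Ia[OF a] unfolding Inv_def by blast
  qed
  moreover have "H \<subseteq> underS r (len t)"
  proof -
    have "ha a \<subseteq> underS r d" if a: "a \<prec> d" for a
    proof -
      have "ha a \<subseteq> underS r a" using Ia[OF a] lra[OF a] unfolding Inv_def by metis
      thus ?thesis using underS_mono[OF lt_imp_le[OF a]] by blast
    qed
    thus ?thesis unfolding cc d_def underS_eq by blast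
  qed
  moreover have "\<forall>i\<in>H. \<forall>j. j \<prec> i \<longrightarrow> j \<in> H"
  proof (intro ballI allI impI)
    fix i j assume i: "i \<in> H" and j: "j \<prec> i"
    then obtain a where a: "a \<prec> d" "i \<in> ha a" unfolding cc underS_eq by blast
    have "j \<in> ha a" using Ia[OF a(1)] a(2) j unfolding Inv_def by blast
    thus "j \<in> H" unfolding cc underS_eq using a(1) by blast
  qed
  moreover have "\<forall>a. (a, len t) \<in> r \<longrightarrow> (\<exists>c' H'. st (rs t a) = Some (c', H') \<and> c \<subseteq> c' \<and> H' \<subseteq> H)"
  proof (intro allI impI)
    fix a assume a: "(a, len t) \<in> r"
    show "\<exists>c' H'. st (rs t a) = Some (c', H') \<and> c \<subseteq> c' \<and> H' \<subseteq> H"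
    proof (cases "a = len t")
      case True thus ?thesis using rs_len[OF t] S by auto
    next
      case False
      hence ad: "a \<prec> d" using a unfolding d_def by (simp add: lt_def)
      have "c \<subseteq> ca a" "ha a \<subseteq> H" unfolding cc using ad unfolding underS_eq by blast+
      thus ?thesis using sa[OF ad] by blast
    qed
  qed
  ultimately show ?thesis unfolding Inv_def using cN tc by blast
qed

lemma inv:
  "t \<in> Seqs r \<Longrightarrow> st t = Some (c,H) \<Longrightarrow> Inv t c H"
proof -
  have "\<forall>t c H. t \<in> Seqs r \<longrightarrow> len t = d \<longrightarrow> st t = Some (c,H) \<longrightarrow> Inv t c H" for d
  proof (induction d rule: lt_induct)
    case (1 d)
    show ?case
    proof (intro allI impI)
      fix t c H assume t: "t \<in> Seqs r" and l: "len t = d" and S: "st t = Some (c,H)"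
      have IH: "Inv (rs t a) c' H'" if "a \<prec> len t" "st (rs t a) = Some (c',H')" for a c' H'
      proof -
        have "rs t a \<in> Seqs r" "len (rs t a) = a" using rs_Seqs len_rs t lt_imp_le[OF that(1)] by blast+
        thus ?thesis using 1 that l by blast
      qed
      have "underS r d = {} \<or> (\<exists>g. d = sc g) \<or> is_limit r d" using ord_cases .
      moreover
      { assume "underS r d = {}"
        hence "d = z0" using underS_empty by blast
        hence "t = Map.empty" using len_z0_root t l by blast
        hence "c = p0 \<and> H = {}" using S st_root by simp
        hence "Inv t c H" using inv_root \<open>t = Map.empty\<close> by simp }
      moreover
      { assume "\<exists>g. d = sc g"
        then obtain g where g: "d = sc g" by blast
        have "g \<prec> len t" using g l lt_sc by simp
        hence "Inv t c H" using inv_step[OF t _ _ S, of g] IH g l by simp }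
      moreover
      { assume "is_limit r d"
        hence "Inv t c H" using inv_lim[OF t _ _ S] IH l by blast }
      ultimately show "Inv t c H" by blast
    qed
  qed
  thus "t \<in> Seqs r \<Longrightarrow> st t = Some (c,H) \<Longrightarrow> Inv t c H" by blast
qed

end

context Kc begin

definition q where "q = {t \<in> Seqs r. st t \<noteq> None}"
definition C where "C t = fst (the (st t))"
definition Hh where "Hh t = snd (the (st t))"

lemma q_Some: "t \<in> q \<Longrightarrow> st t = Some (C t, Hh t)"
  unfolding q_def C_def Hh_def by auto

lemma q_Seqs: "t \<in> q \<Longrightarrow> t \<in> Seqs r" unfolding q_def by blast

lemma q_inv: "t \<in> q \<Longrightarrow> Inv t (C t) (Hh t)"
  using inv q_Some q_Seqs by blast

lemma q_NC: "t \<in> q \<Longrightarrow> C t \<in> NC" using q_inv unfolding Inv_def by blast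
lemma q_in: "t \<in> q \<Longrightarrow> t \<in> C t" using q_inv unfolding Inv_def by blast
lemma q_p0: "t \<in> q \<Longrightarrow> C t \<subseteq> p0" using q_inv unfolding Inv_def by blast
lemma q_H: "t \<in> q \<Longrightarrow> Hh t \<subseteq> underS r (len t)" using q_inv unfolding Inv_def by blast
lemma q_Hinit: "t \<in> q \<Longrightarrow> i \<in> Hh t \<Longrightarrow> j \<prec> i \<Longrightarrow> j \<in> Hh t" using q_inv unfolding Inv_def by blast

lemma q_down:
  assumes t: "t \<in> q" and a: "(a, len t) \<in> r"
  shows "rs t a \<in> q \<and> C t \<subseteq> C (rs t a) \<and> Hh (rs t a) \<subseteq> Hh t"
proof -
  obtain c' H' where o: "st (rs t a) = Some (c', H')" "C t \<subseteq> c'" "H' \<subseteq> Hh t"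
    using q_inv[OF t] a unfolding Inv_def by blast
  have "rs t a \<in> Seqs r" using rs_Seqs q_Seqs[OF t] a by blast
  hence "rs t a \<in> q" using o(1) unfolding q_def by simp
  moreover have "C (rs t a) = c'" "Hh (rs t a) = H'" using o(1) unfolding C_def Hh_def by simp_all
  ultimately show ?thesis using o by simp
qed

lemma ext_q:
  assumes u: "u \<in> q"
  shows "(ext u b \<in> q \<longleftrightarrow> ext u b \<in> C u) \<and>
    (ext u b \<in> q \<longrightarrow>
      C (ext u b) = (if club_splitting r (C u) u then Dsel (C u) (ext u b) (mn (Hh u)) else C u) \<and>
      Hh (ext u b) = (if club_splitting r (C u) u then insert (mn (Hh u)) (Hh u) else Hh u))"
proof -
  have uS: "u \<in> Seqs r" using q_Seqs[OF u] .
  have tS: "ext u b \<in> Seqs r" using ext_Seqs[OF uS] .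
  have "st (ext u b) = stepS (C u) (Hh u) u (ext u b)"
    using st_sc[OF tS len_ext[OF uS]] rs_ext[OF uS] q_Some[OF u] by simp
  thus ?thesis unfolding q_def stepS_def C_def[of "ext u b"] Hh_def[of "ext u b"] using tS by auto
qed

lemma lim_q:
  assumes t: "t \<in> Seqs r" and l: "is_limit r (len t)"
  shows "(t \<in> q \<longleftrightarrow> (\<forall>a. a \<prec> len t \<longrightarrow> rs t a \<in> q)) \<and>
    (t \<in> q \<longrightarrow> C t = \<Inter>(C ` rs t ` underS r (len t)) \<and> Hh t = \<Union>(Hh ` rs t ` underS r (len t)))"
proof -
  have rS: "rs t a \<in> Seqs r" if "a \<prec> len t" for a using rs_Seqs t lt_imp_le that by blast
  have "(\<forall>a\<in>underS r (len t). st (rs t a) \<noteq> None) \<longleftrightarrow> (\<forall>a. a \<prec> len t \<longrightarrow> rs t a \<in> q)"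
    unfolding q_def underS_eq using rS by auto
  moreover have "\<Inter>((\<lambda>a. fst (the (st (rs t a)))) ` underS r (len t)) = \<Inter>(C ` rs t ` underS r (len t))"
    unfolding C_def by (simp add: image_image)
  moreover have "\<Union>((\<lambda>a. snd (the (st (rs t a)))) ` underS r (len t)) = \<Union>(Hh ` rs t ` underS r (len t))"
    unfolding Hh_def by (simp add: image_image)
  ultimately show ?thesis using st_lim[OF t l] t unfolding q_def C_def[of t] Hh_def[of t] by auto
qed

lemma succ_q: "u \<in> q \<Longrightarrow> succ_set r u q = succ_set r u (C u)"
  using ext_q succ_set_eq q_Seqs by auto

lemma root_q: "Map.empty \<in> q"
  unfolding q_def using st_root root_Seqs by simp

lemma q_tree: "is_tree r q"
  unfolding is_tree_def
proof (intro conjI ballI impI)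
  show "q \<noteq> {}" using root_q by blast
  show "q \<subseteq> Seqs r" using q_Seqs by blast
  fix t v assume t: "t \<in> q" and v: "v \<in> Seqs r" and vt: "v \<subseteq>\<^sub>m t"
  have "(len v, len t) \<in> r" "v = rs t (len v)" using map_le_iff[OF v q_Seqs[OF t]] vt by blast+
  thus "v \<in> q" using q_down[OF t] by metis
qed

lemma q_pruned: "pruned r q"
proof (rule prunedI[OF q_tree], intro ballI)
  fix u assume u: "u \<in> q"
  have cM: "C u \<in> MClub r" using NC_MClub[OF q_NC[OF u]] .
  obtain b where "ext u b \<in> C u" using succ_ne[OF MClub_tree[OF cM] MClub_pruned[OF cM] q_in[OF u]] by blast
  thus "\<exists>b. ext u b \<in> q" using ext_q[OF u] by blast
qed

lemma q_closed: "lt_kappa_closed r q"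
  unfolding lt_kappa_closed_def
proof (intro allI impI)
  fix s d assume H: "dom s = underS r d \<and> is_limit r d \<and> (\<forall>a. a \<prec> d \<longrightarrow> s |` underS r a \<in> q)"
  have sS: "s \<in> Seqs r" using H SeqsI by blast
  have ls: "len s = d" using H len_eq by blast
  show "s \<in> q" using lim_q[OF sS] H ls unfolding rs_def by auto
qed

lemma q_sub: "q \<subseteq> p"
  using q_in q_p0 p0 by blast

end

context Kc begin

context
  fixes x assumes x: "x \<in> branches r q"
begin

definition Cx where "Cx a = C (restr r x a)"
definition Hx where "Hx a = Hh (restr r x a)"
definition S where "S = {a. club_splitting r q (restr r x a)}"

lemma xq: "restr r x a \<in> q" using branch_in[OF x] .

lemma F1: "a \<in> S \<longleftrightarrow> club_splitting r (Cx a) (restr r x a)"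
  unfolding S_def Cx_def club_splitting_def using succ_q[OF xq] by simp

lemma F2: "(a,b) \<in> r \<Longrightarrow> Cx b \<subseteq> Cx a \<and> Hx a \<subseteq> Hx b"
  unfolding Cx_def Hx_def using q_down[OF xq, of a b] len_restr rs_restr by simp

lemma CxN: "Cx a \<in> NC" unfolding Cx_def using q_NC[OF xq] .

lemma F3: "x \<in> branches r (Cx a)"
  unfolding branches_def mem_Collect_eq
proof
  fix b
  show "restr r x b \<in> Cx a"
  proof (cases "(a,b) \<in> r")
    case True
    have "restr r x b \<in> Cx b" unfolding Cx_def using q_in[OF xq] .
    thus ?thesis using F2[OF True] by blast
  next
    case False
    hence ba: "(b,a) \<in> r" using le_total by blast
    have T: "is_tree r (Cx a)" using CxN NC_MClub MClub_tree by blast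
    have "restr r x a \<in> Cx a" unfolding Cx_def using q_in[OF xq] .
    thus ?thesis using tree_le[OF T _ restr_Seqs restr_mono[OF ba]] by blast
  qed
qed

lemma F4: "Cx (sc a) = (if a \<in> S then Dsel (Cx a) (restr r x (sc a)) (mn (Hx a)) else Cx a) \<and>
           Hx (sc a) = (if a \<in> S then insert (mn (Hx a)) (Hx a) else Hx a)"
  using ext_q[OF xq[of a], of "x a"] xq[of "sc a"] F1[of a]
  unfolding Cx_def Hx_def restr_sc by simp

lemma F4in: "restr r x (sc a) \<in> Cx a"
  using ext_q[OF xq[of a], of "x a"] xq[of "sc a"] unfolding Cx_def restr_sc by simp

lemma F5: "is_limit r a \<Longrightarrow> Cx a = \<Inter>(Cx ` underS r a) \<and> Hx a = \<Union>(Hx ` underS r a)"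
proof -
  assume l: "is_limit r a"
  have l': "is_limit r (len (restr r x a))" using l len_restr by simp
  have e: "rs (restr r x a) ` underS r a = restr r x ` underS r a"
    using rs_restr unfolding underS_eq by (auto simp: lt_imp_le)
  show ?thesis using lim_q[OF restr_Seqs l'] xq[of a] len_restr e unfolding Cx_def Hx_def
    by (simp add: image_image)
qed

lemma Hx_z0: "Hx z0 = {}"
proof -
  have "restr r x z0 = Map.empty" using dom_restr[of x z0] underS_z0 by simp
  thus ?thesis unfolding Hx_def Hh_def using st_root by simp
qed

lemma S_unbounded: "\<exists>a\<in>S. a0 \<prec> a"
proof (rule ccontr)
  assume N: "\<not> (\<exists>a\<in>S. a0 \<prec> a)"
  define a1 where "a1 = sc a0"
  have const: "(a1, a) \<in> r \<longrightarrow> Cx a = Cx a1" for a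
  proof (induction a rule: lt_induct)
    case (1 a)
    show ?case
    proof
      assume a: "(a1, a) \<in> r"
      show "Cx a = Cx a1"
      proof (cases "a = a1")
        case False
        hence a1a: "a1 \<prec> a" using a by (simp add: lt_def)
        have "underS r a = {} \<or> (\<exists>g. a = sc g) \<or> is_limit r a" using ord_cases .
        moreover have "underS r a \<noteq> {}" using a1a unfolding underS_eq by blast
        moreover
        { assume "\<exists>g. a = sc g"
          then obtain g where g: "a = sc g" by blast
          have "(a1, g) \<in> r" using a1a g lt_sc_iff by simp
          hence "a0 \<prec> g" unfolding a1_def using lt_sc lt_le_trans by blast
          hence "g \<notin> S" using N by blast
          hence "Cx a = Cx g" using F4[of g] g by simp
          moreover have "Cx g = Cx a1" using 1 g lt_sc \<open>(a1, g) \<in> r\<close> by blast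
          ultimately have "Cx a = Cx a1" by simp }
        moreover
        { assume l: "is_limit r a"
          have "Cx a = \<Inter>(Cx ` underS r a)" using F5[OF l] by blast
          moreover have "\<Inter>(Cx ` underS r a) = Cx a1"
          proof
            show "\<Inter>(Cx ` underS r a) \<subseteq> Cx a1" using a1a unfolding underS_eq by blast
            show "Cx a1 \<subseteq> \<Inter>(Cx ` underS r a)"
            proof
              fix y assume y: "y \<in> Cx a1"
              show "y \<in> \<Inter>(Cx ` underS r a)"
              proof (rule InterI)
                fix Z assume "Z \<in> Cx ` underS r a"
                then obtain b where b: "b \<prec> a" "Z = Cx b" unfolding underS_eq by blast
                show "y \<in> Z"
                proof (cases "(a1, b) \<in> r")
                  case True thus ?thesis using 1 b y by blast
                next
                  case False
                  hence "(b, a1) \<in> r" using le_total by blast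
                  thus ?thesis using F2 b y by blast
                qed
              qed
            qed
          qed
          ultimately have "Cx a = Cx a1" by simp }
        ultimately show ?thesis by blast
      qed simp
    qed
  qed
  have cl: "club r {a. club_splitting r (Cx a1) (restr r x a)}"
    using MClub_branch[OF NC_MClub[OF CxN] F3] .
  obtain a where a: "club_splitting r (Cx a1) (restr r x a)" "a1 \<prec> a"
    using club_unbounded[OF cl] by blast
  have "Cx a = Cx a1" using const lt_imp_le[OF a(2)] by blast
  hence "a \<in> S" using F1 a(1) by simp
  moreover have "a0 \<prec> a" using lt_sc a(2) lt_trans unfolding a1_def by blast
  ultimately show False using N by blast
qed

lemma S_closed: "closed_set r S"
  unfolding closed_set_def
proof (intro allI impI)
  fix a assume H: "(\<exists>b. b \<prec> a) \<and> (\<forall>b. b \<prec> a \<longrightarrow> (\<exists>c\<in>S. b \<prec> c \<and> c \<prec> a))"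
  have l: "is_limit r a" unfolding is_limit_def using H by blast
  have ra: "restr r x a \<in> Seqs r" using restr_Seqs .
  have cb: "club r (succ_set r (restr r x a) (Cx b))" if b: "b \<prec> a" for b
  proof -
    have cl: "club r {a. club_splitting r (Cx b) (restr r x a)}"
      using MClub_branch[OF NC_MClub[OF CxN] F3] .
    have "a \<in> {a. club_splitting r (Cx b) (restr r x a)}"
    proof -
      have "closed_set r {a. club_splitting r (Cx b) (restr r x a)}" using cl unfolding club_def by blast
      moreover have "\<forall>be. be \<prec> a \<longrightarrow> (\<exists>c\<in>{a. club_splitting r (Cx b) (restr r x a)}. be \<prec> c \<and> c \<prec> a)"
      proof (intro allI impI)
        fix be assume be: "be \<prec> a"
        obtain m where m: "(be, m) \<in> r" "(b, m) \<in> r" "m \<prec> a"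
        proof (cases "(be, b) \<in> r")
          case True thus ?thesis using that[of b] b by simp
        next
          case False
          hence "(b, be) \<in> r" using le_total by blast
          thus ?thesis using that[of be] be by simp
        qed
        obtain c where c: "c \<in> S" "m \<prec> c" "c \<prec> a" using H m(3) by blast
        have "club_splitting r (Cx c) (restr r x c)" using F1 c(1) by blast
        moreover have "Cx c \<subseteq> Cx b" using F2 m(2) c(2) lt_imp_le le_trans by blast
        hence "succ_set r (restr r x c) (Cx c) \<subseteq> succ_set r (restr r x c) (Cx b)"
          using succ_sub restr_Seqs by blast
        ultimately have "club_splitting r (Cx b) (restr r x c)"
          using normal_club_mono[OF NC_normal[OF CxN]] F3 branch_in unfolding club_splitting_def by blast
        moreover have "be \<prec> c" using m(1) c(2) le_lt_trans by blast
        ultimately show "\<exists>c\<in>{a. club_splitting r (Cx b) (restr r x a)}. be \<prec> c \<and> c \<prec> a"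
          using c(3) by blast
      qed
      ultimately show ?thesis using H unfolding closed_set_def by blast
    qed
    thus ?thesis unfolding club_splitting_def by simp
  qed
  have "succ_set r (restr r x a) (Cx a) = \<Inter>((\<lambda>b. succ_set r (restr r x a) (Cx b)) ` underS r a)"
    using F5[OF l] succ_set_eq[OF ra] by auto
  moreover have "club r (\<Inter>((\<lambda>b. succ_set r (restr r x a) (Cx b)) ` underS r a))"
  proof (rule club_Inter)
    show "|(\<lambda>b. succ_set r (restr r x a) (Cx b)) ` underS r a| <o r" using small_image underS_card by blast
    show "\<forall>C\<in>(\<lambda>b. succ_set r (restr r x a) (Cx b)) ` underS r a. club r C"
      using cb unfolding underS_eq by blast
  qed
  ultimately have "club_splitting r (Cx a) (restr r x a)" unfolding club_splitting_def by simp
  thus "a \<in> S" using F1 by blast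
qed

lemma S_club: "club r S"
  unfolding club_def unbounded_def using S_closed S_unbounded by blast

lemma avoid: "x \<notin> F j"
proof
  assume xF: "x \<in> F j"
  have ex: "\<exists>a. j \<in> Hx a"
  proof (rule ccontr)
    assume N: "\<not> (\<exists>a. j \<in> Hx a)"
    have Hj: "Hx a \<subseteq> underS r j" for a
    proof
      fix i assume i: "i \<in> Hx a"
      show "i \<in> underS r j"
      proof (rule ccontr)
        assume "i \<notin> underS r j"
        hence "(j, i) \<in> r" using not_lt unfolding underS_eq by blast
        hence "j = i \<or> j \<prec> i" unfolding lt_def by blast
        hence "j \<in> Hx a" using i q_Hinit[OF xq] unfolding Hx_def by blast
        thus False using N by blast
      qed
    qed
    have aH: "a \<notin> Hx a" for a
      using q_H[OF xq[of a]] len_restr unfolding Hx_def underS_eq by auto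
    define m where "m a = mn (Hx a)" for a
    have mS: "m a \<in> Hx (sc a)" if "a \<in> S" for a using F4[of a] that unfolding m_def by simp
    have inj: "inj_on m S"
    proof
      fix a a' assume a: "a \<in> S" and a': "a' \<in> S" and e: "m a = m a'"
      show "a = a'"
      proof (rule ccontr)
        assume ne: "a \<noteq> a'"
        { fix a a' assume a: "a \<in> S" and a': "a' \<in> S" and e: "m a = m a'" and lt: "a \<prec> a'"
          have "m a \<in> Hx a'" using mS[OF a] F2[OF sc_least[OF lt]] by blast
          moreover have "m a' \<notin> Hx a'" unfolding m_def using mn[OF aH] by blast
          ultimately have False using e by simp }
        thus False using lt_total[of a a'] ne a a' e by metis
      qed
    qed
    have "m ` S \<subseteq> underS r j" using mS Hj by blast
    hence "|S| \<le>o |underS r j|" using inj card_of_ordLeq by blast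
    hence "|S| <o r" using underS_card ordLeq_ordLess_trans by blast
    thus False using unbounded_big S_club unfolding club_def by blast
  qed
  then obtain a where a: "j \<in> Hx a" and amin: "\<forall>b. j \<in> Hx b \<longrightarrow> (a, b) \<in> r"
    using least_ex[where P="\<lambda>b. j \<in> Hx b"] by blast
  have bel: "j \<notin> Hx b" if "b \<prec> a" for b using amin that not_lt by blast
  have "underS r a = {} \<or> (\<exists>g. a = sc g) \<or> is_limit r a" using ord_cases .
  moreover have "underS r a \<noteq> {}"
  proof
    assume "underS r a = {}"
    hence "a = z0" using underS_empty by blast
    thus False using a Hx_z0 by simp
  qed
  moreover have "\<not> is_limit r a"
  proof
    assume l: "is_limit r a"
    then obtain b where "b \<prec> a" "j \<in> Hx b" using F5[OF l] a unfolding underS_eq by blast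
    thus False using bel by blast
  qed
  ultimately obtain g where g: "a = sc g" by blast
  have jg: "j \<notin> Hx g" using bel lt_sc g by blast
  have gS: "g \<in> S" using F4[of g] a g jg by (auto split: if_splits)
  have jm: "j = mn (Hx g)" using F4[of g] a g jg gS by simp
  have Ca: "Cx a = Dsel (Cx g) (restr r x a) j" using F4[of g] gS g jm by simp
  have "branches r (Cx a) \<inter> F j = {}" using Dsel[OF CxN F4in[of g]] Ca g by simp
  thus False using F3[of a] xF by blast
qed

end

lemma q_MClub: "q \<in> MClub r"
proof (rule MClubI[OF q_tree q_pruned q_closed], intro ballI)
  fix x assume x: "x \<in> branches r q"
  show "club r {a. club_splitting r q (restr r x a)}" using S_club[OF x] unfolding S_def[OF x] .
qed

lemma main_Kc: "\<exists>q\<in>MClub r. q \<subseteq> p \<and> branches r q \<inter> (\<Union>i. F i) = {}"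
  using q_MClub q_sub avoid by blast

end

theorem mainTheorem6:
  fixes r :: "'a rel"
  assumes "kappa_assms r"
  shows "nowhere_dense r (MClub r) = ideal_I r (MClub r)"
proof
  show "nowhere_dense r (MClub r) \<subseteq> ideal_I r (MClub r)"
  proof
    fix X assume "X \<in> nowhere_dense r (MClub r)"
    hence "\<exists>F :: 'a \<Rightarrow> ('a \<Rightarrow> 'a) set. (\<forall>a. F a \<in> nowhere_dense r (MClub r)) \<and> X \<subseteq> (\<Union>a. F a)"
      by (intro exI[where x="\<lambda>_::'a. X"]) simp
    thus "X \<in> ideal_I r (MClub r)" unfolding ideal_I_def by (rule CollectI)
  qed
  show "ideal_I r (MClub r) \<subseteq> nowhere_dense r (MClub r)"
  proof
    fix X assume "X \<in> ideal_I r (MClub r)"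
    then obtain F :: "'a \<Rightarrow> ('a \<Rightarrow> 'a) set" where F: "\<forall>a. F a \<in> nowhere_dense r (MClub r)" and XF: "X \<subseteq> (\<Union>a. F a)"
      unfolding ideal_I_def by blast
    show "X \<in> nowhere_dense r (MClub r)" unfolding nowhere_dense_def
    proof (intro CollectI ballI)
      fix p assume p: "p \<in> MClub r"
      have FF: "\<And>i. F i \<in> nowhere_dense r (MClub r)" using F by blast
      have KK: "Kc r p F" using Kc.intro[OF K.intro[OF assms] Kc_axioms.intro[OF p FF]] .
      obtain q where q: "q \<in> MClub r" "q \<subseteq> p" "branches r q \<inter> (\<Union>i. F i) = {}"
        using Kc.main_Kc[OF KK] by blast
      have "branches r q \<inter> X = {}" using q(3) XF by blast
      thus "\<exists>q\<in>MClub r. q \<subseteq> p \<and> branches r q \<inter> X = {}" using q(1,2) by blast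
    qed
  qed
qed

end
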